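(* Let $U\in C^\infty(\mathbb{R}^{2d})$ be real and satisfy Hypothesis (U), with associated symplectomorphism $\Phi$. Then the map $S^m(\mathbb{R}^d)\ni a\mapsto\mathfrak{Op}^A_\Phi(a)\in\mathbb{B}(\mathcal S(\mathbb{R}^d))$ is injective.
   Context: Notation: $\langle\xi\rangle=(1+|\xi|^2)^{1/2}$, $\bar d\eta=(2\pi)^{-d}d\eta$. $S^m(\mathbb{R}^d)$: $a\in C^\infty(\mathbb{R}^{2d})$ with $|\partial_x^\alpha\partial_\xi^\beta a|\le C_{\alpha\beta}\langle\xi\rangle^{m-|\beta|}$. $S^+$: smooth $f$ with $\partial_{x_j}f\in S^1$, $\partial_{\xi_j}f\in S^0$. Hypothesis (U): $U(x,\eta)=\langle x,\eta\rangle+d(x,\eta)$, $d\in S^+$ real, $\|(\partial_{x_j}\partial_{\eta_k}d)\|\le\delta<1$ everywhere; $\Phi$ is given by $\Phi(\nabla_\eta U(x,\eta),\eta)=(x,\nabla_xU(x,\eta))$. Magnetic field $B=\frac12\sum B_{jk}dx_j\wedge dx_k$ closed, real $B_{jk}=-B_{kj}\in BC^\infty$; $A$ real 1-form with smooth polynomially bounded coefficients, $dA=B$; $\omega^A(x,y)=\exp\{-i\int_{[x,y]}A\}$ (line integral along the segment $x\to y$). $[\mathfrak{Op}^A_\Phi(a)u](x)=\iint e^{i(U(x,\eta)-\langle y,\eta\rangle)}\omega^A(x,y)a(x,\eta)u(y)dy\,\bar d\eta$ (oscillatory integral), a continuous linear operator on $\mathcal S(\mathbb{R}^d)$. *)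

theory Defs
  imports "HOL-Analysis.Analysis"
begin

definition dD :: "'a::real_normed_vector \<Rightarrow> ('a \<Rightarrow> 'b::real_normed_vector) \<Rightarrow> 'a \<Rightarrow> 'b" where
  "dD v f x = frechet_derivative f (at x) v"

fun dDs :: "'a::real_normed_vector list \<Rightarrow> ('a \<Rightarrow> 'b::real_normed_vector) \<Rightarrow> 'a \<Rightarrow> 'b" where
  "dDs [] f = f"
| "dDs (v # vs) f = dD v (dDs vs f)"

definition smooth :: "('a::euclidean_space \<Rightarrow> 'b::real_normed_vector) \<Rightarrow> bool" where
  "smooth f \<longleftrightarrow> (\<forall>vs. set vs \<subseteq> Basis \<longrightarrow> dDs vs f differentiable_on UNIV)"

definition jbr :: "'a::real_normed_vector \<Rightarrow> real" where
  "jbr \<xi> = sqrt (1 + (norm \<xi>)\<^sup>2)"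

text \<open>Basis directions of the product are (e_j,0) (x-derivatives)
  and (0,e_k) (xi-derivatives); the xi-order of a list of directions is the number of those with first
  component 0.\<close>
definition symb :: "real \<Rightarrow> ((real^'n) \<times> (real^'n) \<Rightarrow> 'b::real_normed_vector) set" where
  "symb m = {a. smooth a \<and>
     (\<forall>vs. set vs \<subseteq> Basis \<longrightarrow> (\<exists>C. \<forall>x \<xi>.
        norm (dDs vs a (x, \<xi>)) \<le> C * jbr \<xi> powr (m - real (length (filter (\<lambda>v. fst v = 0) vs)))))}"

definition splus :: "((real^'n) \<times> (real^'n) \<Rightarrow> 'b::real_normed_vector) set" where
  "splus = {f. smooth f \<and> (\<forall>j. dD (axis j 1, 0) f \<in> symb 1 \<and> dD (0, axis j 1) f \<in> symb 0)}"

definition mixmat :: "((real^'n) \<times> (real^'n) \<Rightarrow> real) \<Rightarrow> real^'n \<Rightarrow> real^'n \<Rightarrow> real^'n^'n" where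
  "mixmat d x \<eta> = (\<chi> j k. dD (axis j 1, 0) (dD (0, axis k 1) d) (x, \<eta>))"

definition bcinf :: "('a::euclidean_space \<Rightarrow> 'b::real_normed_vector) \<Rightarrow> bool" where
  "bcinf f \<longleftrightarrow> smooth f \<and> (\<forall>vs. set vs \<subseteq> Basis \<longrightarrow> (\<exists>C. \<forall>x. norm (dDs vs f x) \<le> C))"

definition polysmooth :: "('a::euclidean_space \<Rightarrow> 'b::real_normed_vector) \<Rightarrow> bool" where
  "polysmooth f \<longleftrightarrow> smooth f \<and>
     (\<forall>vs. set vs \<subseteq> Basis \<longrightarrow> (\<exists>C (N::nat). \<forall>x. norm (dDs vs f x) \<le> C * (1 + norm x) ^ N))"

definition schwartz :: "('a::euclidean_space \<Rightarrow> complex) set" where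
  "schwartz = {u. smooth u \<and>
     (\<forall>vs. set vs \<subseteq> Basis \<longrightarrow> (\<forall>N::nat. \<exists>C. \<forall>x. (1 + norm x) ^ N * norm (dDs vs u x) \<le> C))}"

text \<open>omega^A(x,y) = exp(-i int_{[x,y]} A), with A given by its coefficient vector field.\<close>
definition omegaA :: "(real^'n \<Rightarrow> real^'n) \<Rightarrow> real^'n \<Rightarrow> real^'n \<Rightarrow> complex" where
  "omegaA A x y = exp (- \<i> * complex_of_real (integral {0..1} (\<lambda>t. A (x + t *\<^sub>R (y - x)) \<bullet> (y - x))))"

text \<open>The magnetic FIO, for Schwartz u: the oscillatory integral is realised as the iterated
  (absolutely convergent) integral, first in y, then in eta.\<close>
definition OpA :: "(real^'n \<Rightarrow> real^'n) \<Rightarrow> ((real^'n) \<times> (real^'n) \<Rightarrow> real)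
     \<Rightarrow> ((real^'n) \<times> (real^'n) \<Rightarrow> complex) \<Rightarrow> (real^'n \<Rightarrow> complex) \<Rightarrow> real^'n \<Rightarrow> complex" where
  "OpA A U a u x = complex_of_real ((2 * pi) powr (- real CARD('n))) *
     (\<integral>\<eta>. (\<integral>y. exp (\<i> * complex_of_real (U (x, \<eta>) - y \<bullet> \<eta>)) * omegaA A x y * a (x, \<eta>) * u y \<partial>lborel) \<partial>lborel)"

end

theory Submission
  imports Defs "HOL-Probability.Probability"
begin


lemma inner_sum_Basis_eq:
  fixes b :: "'a::euclidean_space"
  assumes "b \<in> Basis"
  shows "(\<Sum>c\<in>Basis. x c *\<^sub>R c) \<bullet> b = x b"
  using assms by (simp add: inner_sum_left inner_Basis if_distrib cong: if_cong)

lemma lborel_prod_integrable_integral: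
  fixes f :: "'a::euclidean_space \<Rightarrow> real \<Rightarrow> 'c::{real_normed_field,banach,second_countable_topology}"
  assumes int: "\<And>b. b\<in>Basis \<Longrightarrow> integrable lborel (f b)"
  shows "integrable lborel (\<lambda>x. \<Prod>b\<in>Basis. f b (x \<bullet> b))"
    and "(\<integral>x. (\<Prod>b\<in>Basis. f b (x \<bullet> b)) \<partial>lborel) = (\<Prod>b\<in>Basis. \<integral>x. f b x \<partial>lborel)"
proof -
  interpret product_sigma_finite "\<lambda>_::'a. lborel::real measure" by standard
  have meas[measurable]: "\<And>b. b\<in>Basis \<Longrightarrow> f b \<in> borel_measurable borel"
    using int by (simp add: borel_measurable_integrable)
  have m2: "(\<lambda>x. \<Prod>b\<in>Basis. f b (x \<bullet> b)) \<in> borel_measurable borel"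
    by measurable
  have eq: "\<And>x. (\<Prod>b\<in>Basis. f b ((\<Sum>c\<in>Basis. x c *\<^sub>R c) \<bullet> b)) = (\<Prod>b\<in>Basis. f b (x b))"
    by (intro prod.cong refl) (simp add: inner_sum_Basis_eq)
  have pint: "integrable (\<Pi>\<^sub>M b\<in>Basis. lborel) (\<lambda>x. \<Prod>b\<in>Basis. f b (x b))"
    by (rule product_integrable_prod) (auto intro: int)
  show "integrable lborel (\<lambda>x. \<Prod>b\<in>Basis. f b (x \<bullet> b))"
    apply (subst lborel_eq)
    apply (subst integrable_distr_eq)
      apply measurable
    using m2 apply simp
    using pint by (simp add: eq)
  show "(\<integral>x. (\<Prod>b\<in>Basis. f b (x \<bullet> b)) \<partial>lborel) = (\<Prod>b\<in>Basis. \<integral>x. f b x \<partial>lborel)"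
    apply (subst lborel_eq)
    apply (subst integral_distr)
      apply measurable
    using m2 apply simp
    using product_integral_prod[of Basis f] int by simp
qed


lemma std_gauss_char:
  "(\<integral>x. complex_of_real (std_normal_density x) * exp (\<i> * complex_of_real (t * x)) \<partial>lborel)
     = complex_of_real (exp (- (t^2) / 2))"
proof -
  have "char std_normal_distribution t = complex_of_real (exp (- (t^2) / 2))"
    by (simp add: char_std_normal_distribution)
  moreover have "char std_normal_distribution t =
     (\<integral>x. std_normal_density x *\<^sub>R exp (\<i> * complex_of_real (t * x)) \<partial>lborel)"
    unfolding char_def
    by (subst integral_density) (auto simp: normal_density_nonneg)
  ultimately show ?thesis by (simp add: scaleR_conv_of_real)
qed

lemma std_gauss_char_integrable:
  "integrable lborel (\<lambda>x. complex_of_real (std_normal_density x) * exp (\<i> * complex_of_real (t * x)))"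
proof (rule Bochner_Integration.integrable_bound[where f="\<lambda>x. std_normal_density x"])
  show "integrable lborel (std_normal_density)" by simp
  show "(\<lambda>x. complex_of_real (std_normal_density x) * exp (\<i> * complex_of_real (t * x))) \<in> borel_measurable lborel"
    unfolding normal_density_def by measurable
  show "AE x in lborel. norm (complex_of_real (std_normal_density x) * exp (\<i> * complex_of_real (t * x)))
          \<le> norm (std_normal_density x)"
    by (auto simp: norm_mult normal_density_nonneg)
qed

lemma gauss1d:
  fixes e z :: real
  assumes e: "e > 0"
  shows "integrable lborel (\<lambda>s. exp (- (\<i> * complex_of_real (s * z)) - complex_of_real (e\<^sup>2 / 2 * s\<^sup>2)))"
    and "(\<integral>s. exp (- (\<i> * complex_of_real (s * z)) - complex_of_real (e\<^sup>2 / 2 * s\<^sup>2)) \<partial>lborel)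
          = complex_of_real (sqrt (2*pi) / e * exp (- (z\<^sup>2) / (2 * e\<^sup>2)))"
proof -
  define t where "t = - z / e"
  define h where "h x = complex_of_real (std_normal_density x) * exp (\<i> * complex_of_real (t * x))" for x
  have hint: "integrable lborel h" unfolding h_def by (rule std_gauss_char_integrable)
  have hval: "(\<integral>x. h x \<partial>lborel) = complex_of_real (exp (- (t^2) / 2))"
    unfolding h_def by (rule std_gauss_char)
  have eq: "exp (- (\<i> * complex_of_real (s * z)) - complex_of_real (e\<^sup>2 / 2 * s\<^sup>2))
        = complex_of_real (sqrt (2*pi)) * h (0 + e * s)" for s
  proof -
    have "h (0 + e * s) = complex_of_real (1 / sqrt (2 * pi)) * (complex_of_real (exp (- (e * s)\<^sup>2 / 2)) * exp (\<i> * complex_of_real (t * (e * s))))"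
      unfolding h_def std_normal_density_def by (simp add: of_real_mult)
    also have "complex_of_real (exp (- (e * s)\<^sup>2 / 2)) * exp (\<i> * complex_of_real (t * (e * s)))
        = exp (- (\<i> * complex_of_real (s * z)) - complex_of_real (e\<^sup>2 / 2 * s\<^sup>2))"
      using e unfolding t_def
      by (simp add: exp_of_real[symmetric] exp_add[symmetric] field_simps power2_eq_square)
    finally show ?thesis by (simp add: field_simps)
  qed
  have int2: "integrable lborel (\<lambda>s. h (0 + e * s))"
    using lborel_integrable_real_affine[OF hint, of e 0] e by simp
  show "integrable lborel (\<lambda>s. exp (- (\<i> * complex_of_real (s * z)) - complex_of_real (e\<^sup>2 / 2 * s\<^sup>2)))"
    unfolding eq using int2 by simp
  have "(\<integral>x. h x \<partial>lborel) = \<bar>e\<bar> *\<^sub>R (\<integral>s. h (0 + e * s) \<partial>lborel)"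
    using lborel_integral_real_affine[of e h 0] e by simp
  then have "(\<integral>s. h (0 + e * s) \<partial>lborel) = complex_of_real (exp (- (t^2) / 2) / e)"
    using e hval by (simp add: scaleR_conv_of_real field_simps)
  then show "(\<integral>s. exp (- (\<i> * complex_of_real (s * z)) - complex_of_real (e\<^sup>2 / 2 * s\<^sup>2)) \<partial>lborel)
          = complex_of_real (sqrt (2*pi) / e * exp (- (z\<^sup>2) / (2 * e\<^sup>2)))"
    unfolding eq using e by (simp add: t_def power_divide field_simps)
qed


lemma gauss_fourier:
  fixes z :: "'a::euclidean_space" and e :: real
  assumes e: "e > 0"
  shows "integrable lborel (\<lambda>y. exp (- (\<i> * complex_of_real (y \<bullet> z)) - complex_of_real (e\<^sup>2 / 2 * (y \<bullet> y))))"
    and "(\<integral>y. exp (- (\<i> * complex_of_real (y \<bullet> z)) - complex_of_real (e\<^sup>2 / 2 * (y \<bullet> y))) \<partial>lborel)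
          = complex_of_real ((sqrt (2*pi) / e) ^ DIM('a) * exp (- (z \<bullet> z) / (2 * e\<^sup>2)))"
proof -
  define f where "f b s = exp (- (\<i> * complex_of_real (s * (z \<bullet> b))) - complex_of_real (e\<^sup>2 / 2 * s\<^sup>2))" for b s
  have fint: "integrable lborel (f b)" for b
    unfolding f_def by (rule gauss1d(1)[OF e])
  have eq: "exp (- (\<i> * complex_of_real (y \<bullet> z)) - complex_of_real (e\<^sup>2 / 2 * (y \<bullet> y)))
      = (\<Prod>b\<in>Basis. f b (y \<bullet> b))" for y
  proof -
    have "- (\<i> * complex_of_real (y \<bullet> z)) - complex_of_real (e\<^sup>2 / 2 * (y \<bullet> y))
       = (\<Sum>b\<in>Basis. - (\<i> * complex_of_real ((y \<bullet> b) * (z \<bullet> b))) - complex_of_real (e\<^sup>2 / 2 * (y \<bullet> b)\<^sup>2))"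
      by (simp add: euclidean_inner[of y z] euclidean_inner[of y y] sum_subtractf sum_negf
            sum_distrib_left of_real_sum power2_eq_square)
    then show ?thesis unfolding f_def by (simp add: exp_sum)
  qed
  show "integrable lborel (\<lambda>y. exp (- (\<i> * complex_of_real (y \<bullet> z)) - complex_of_real (e\<^sup>2 / 2 * (y \<bullet> y))))"
    unfolding eq by (rule lborel_prod_integrable_integral(1)) (rule fint)
  have "(\<integral>y. exp (- (\<i> * complex_of_real (y \<bullet> z)) - complex_of_real (e\<^sup>2 / 2 * (y \<bullet> y))) \<partial>lborel)
     = (\<Prod>b\<in>Basis. \<integral>s. f b s \<partial>lborel)"
    unfolding eq by (rule lborel_prod_integrable_integral(2)) (rule fint)
  also have "\<dots> = (\<Prod>b\<in>(Basis::'a set). complex_of_real (sqrt (2*pi) / e * exp (- ((z \<bullet> b)\<^sup>2) / (2 * e\<^sup>2))))"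
    unfolding f_def by (intro prod.cong refl gauss1d(2)[OF e])
  also have "\<dots> = complex_of_real ((sqrt (2*pi) / e) ^ DIM('a) * exp (- (z \<bullet> z) / (2 * e\<^sup>2)))"
  proof -
    have "(\<Prod>b\<in>(Basis::'a set). exp (- ((z \<bullet> b)\<^sup>2) / (2 * e\<^sup>2))) = exp (\<Sum>b\<in>(Basis::'a set). - ((z \<bullet> b)\<^sup>2) / (2 * e\<^sup>2))"
      by (simp add: exp_sum)
    also have "(\<Sum>b\<in>(Basis::'a set). - ((z \<bullet> b)\<^sup>2) / (2 * e\<^sup>2)) = - (z \<bullet> z) / (2 * e\<^sup>2)"
      by (simp add: euclidean_inner[of z z] sum_divide_distrib[symmetric] sum_negf power2_eq_square)
    finally have A: "(\<Prod>b\<in>(Basis::'a set). exp (- ((z \<bullet> b)\<^sup>2) / (2 * e\<^sup>2))) = exp (- (z \<bullet> z) / (2 * e\<^sup>2))" .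
    have "(\<Prod>b\<in>(Basis::'a set). sqrt (2*pi) / e * exp (- ((z \<bullet> b)\<^sup>2) / (2 * e\<^sup>2)))
       = (\<Prod>b\<in>(Basis::'a set). sqrt (2*pi) / e) * (\<Prod>b\<in>(Basis::'a set). exp (- ((z \<bullet> b)\<^sup>2) / (2 * e\<^sup>2)))"
      by (rule prod.distrib)
    also have "\<dots> = (sqrt (2*pi) / e) ^ DIM('a) * exp (- (z \<bullet> z) / (2 * e\<^sup>2))"
      by (simp only: A prod_constant)
    finally have B: "(\<Prod>b\<in>(Basis::'a set). sqrt (2*pi) / e * exp (- ((z \<bullet> b)\<^sup>2) / (2 * e\<^sup>2)))
       = (sqrt (2*pi) / e) ^ DIM('a) * exp (- (z \<bullet> z) / (2 * e\<^sup>2))" .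
    from B show ?thesis
      by (simp only: of_real_prod[symmetric])
  qed
  finally show "(\<integral>y. exp (- (\<i> * complex_of_real (y \<bullet> z)) - complex_of_real (e\<^sup>2 / 2 * (y \<bullet> y))) \<partial>lborel)
          = complex_of_real ((sqrt (2*pi) / e) ^ DIM('a) * exp (- (z \<bullet> z) / (2 * e\<^sup>2)))" .
qed

lemma gauss_integrable:
  fixes p :: "'a::euclidean_space" and c :: real
  assumes c: "c > 0"
  shows "integrable lborel (\<lambda>y. exp (- c * ((y - p) \<bullet> (y - p))))"
proof -
  define s where "s = 1 / sqrt (2 * c)"
  have spos: "s > 0" unfolding s_def using c by simp
  have s2: "2 * s\<^sup>2 = 1 / c" using c by (simp add: s_def power_divide)
  define f where "f b x = sqrt (2 * pi * s\<^sup>2) * normal_density (p \<bullet> b) s x" for b x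
  have fint: "integrable lborel (f b)" for b
    proof -
    have "integrable lborel (normal_density (p \<bullet> b) s)" using spos by (rule integrable_normal_density)
    then show ?thesis unfolding f_def by (rule integrable_mult_right)
  qed
  have fe: "f b x = exp (- c * (x - p \<bullet> b)\<^sup>2)" for b x
  proof -
    have "sqrt (2 * pi * s\<^sup>2) > 0" using spos by simp
    then have 1: "sqrt (2 * pi * s\<^sup>2) * (1 / sqrt (2 * pi * s\<^sup>2)) = 1" using spos by (metis less_numeral_extra(3) nonzero_mult_div_cancel_left div_by_1 times_divide_eq_right)
    have 2: "-(x - p \<bullet> b)\<^sup>2/ (2 * s\<^sup>2) = - c * (x - p \<bullet> b)\<^sup>2"
      using c by (simp add: s2)
    show ?thesis unfolding f_def normal_density_def
      by (simp only: mult.assoc[symmetric] 1 2 mult_1)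
  qed
  have eq: "exp (- c * ((y - p) \<bullet> (y - p))) = (\<Prod>b\<in>Basis. f b (y \<bullet> b))" for y
  proof -
    have "- c * ((y - p) \<bullet> (y - p)) = (\<Sum>b\<in>Basis. - c * (y \<bullet> b - p \<bullet> b)\<^sup>2)"
    proof -
      have "(y - p) \<bullet> (y - p) = (\<Sum>b\<in>Basis. ((y - p) \<bullet> b) * ((y - p) \<bullet> b))" by (rule euclidean_inner)
      then show ?thesis by (simp add: sum_distrib_left inner_diff_left power2_eq_square)
    qed
    then show ?thesis by (simp add: fe exp_sum)
  qed
  show ?thesis unfolding eq by (rule lborel_prod_integrable_integral(1)) (rule fint)
qed


lemma polygauss_bound:
  fixes r c :: real and K :: nat
  assumes c: "c > 0" and r: "r \<ge> 0"
  shows "(1 + r) ^ K * exp (- c * r\<^sup>2) \<le> exp (real K ^ 2 / (4 * c))"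
proof -
  have "(1 + r) ^ K \<le> exp r ^ K"
    using r by (intro power_mono) (auto simp: exp_ge_add_one_self)
  also have "\<dots> = exp (real K * r)" by (simp add: exp_of_nat_mult[symmetric])
  finally have 1: "(1 + r) ^ K * exp (- c * r\<^sup>2) \<le> exp (real K * r) * exp (- c * r\<^sup>2)"
    by (intro mult_right_mono) auto
  have "real K * r - c * r\<^sup>2 \<le> real K ^ 2 / (4 * c)"
  proof -
    have "0 \<le> (real K - 2 * c * r)\<^sup>2" by simp
    then have "0 \<le> real K ^ 2 - 4 * c * (real K * r - c * r\<^sup>2)"
      by (simp add: power2_eq_square algebra_simps)
    then show ?thesis using c by (simp add: field_simps)
  qed
  then have "exp (real K * r) * exp (- c * r\<^sup>2) \<le> exp (real K ^ 2 / (4 * c))"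
    by (simp add: exp_add[symmetric])
  with 1 show ?thesis by linarith
qed

lemma integrable_polygauss:
  fixes h :: "'a::euclidean_space \<Rightarrow> 'b::{banach,second_countable_topology}"
  assumes hm: "h \<in> borel_measurable borel"
    and c: "c > 0"
    and hb: "\<And>y. norm (h y) \<le> C * (1 + norm y) ^ N * exp (- c * ((y - p) \<bullet> (y - p)))"
  shows "integrable lborel h"
proof (rule Bochner_Integration.integrable_bound)
  define M where "M = C * (1 + norm p) ^ N * exp (real N ^ 2 / (4 * (c/2)))"
  show "integrable lborel (\<lambda>y. M * exp (- (c/2) * ((y - p) \<bullet> (y - p))))"
    using c by (intro integrable_mult_right gauss_integrable) auto
  show "h \<in> borel_measurable lborel" using hm by simp
  show "AE y in lborel. norm (h y) \<le> norm (M * exp (- (c/2) * ((y - p) \<bullet> (y - p))))"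
  proof (intro AE_I2)
    fix y
    have C0: "C \<ge> 0"
    proof -
      have "0 \<le> C * (1 + norm y) ^ N * exp (- c * ((y - p) \<bullet> (y - p)))"
        using hb[of y] norm_ge_zero order_trans by blast
      moreover have "0 < (1 + norm y) ^ N" by (simp add: add_pos_nonneg)
      ultimately show ?thesis by (simp add: zero_le_mult_iff)
    qed
    have n1: "1 + norm y \<le> (1 + norm p) * (1 + norm (y - p))"
    proof -
      have "norm y \<le> norm p + norm (y - p)" by (metis norm_triangle_sub add.commute)
      then show ?thesis by (simp add: algebra_simps) (smt (verit) mult_nonneg_nonneg norm_ge_zero)
    qed
    have pw: "(1 + norm y) ^ N \<le> (1 + norm p) ^ N * (1 + norm (y - p)) ^ N"
      by (simp add: power_mult_distrib[symmetric]) (intro power_mono n1, simp)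
    have sq: "(y - p) \<bullet> (y - p) = (norm (y - p))\<^sup>2" by (simp add: power2_norm_eq_inner)
    have pg: "(1 + norm (y - p)) ^ N * exp (- (c/2) * (norm (y - p))\<^sup>2) \<le> exp (real N ^ 2 / (4 * (c/2)))"
      using c by (intro polygauss_bound) auto
    have "norm (h y) \<le> C * (1 + norm y) ^ N * exp (- c * ((y - p) \<bullet> (y - p)))" by (rule hb)
    also have "\<dots> \<le> C * ((1 + norm p) ^ N * (1 + norm (y - p)) ^ N) * exp (- c * ((y - p) \<bullet> (y - p)))"
      using C0 pw by (intro mult_right_mono mult_left_mono) auto
    also have "exp (- c * ((y - p) \<bullet> (y - p))) = exp (- (c/2) * (norm (y - p))\<^sup>2) * exp (- (c/2) * ((y - p) \<bullet> (y - p)))"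
      by (simp add: sq exp_add[symmetric])
    also have "C * ((1 + norm p) ^ N * (1 + norm (y - p)) ^ N) * (exp (- (c/2) * (norm (y - p))\<^sup>2) * exp (- (c/2) * ((y - p) \<bullet> (y - p))))
       = C * (1 + norm p) ^ N * ((1 + norm (y - p)) ^ N * exp (- (c/2) * (norm (y - p))\<^sup>2)) * exp (- (c/2) * ((y - p) \<bullet> (y - p)))"
      by (simp add: algebra_simps)
    also have "\<dots> \<le> C * (1 + norm p) ^ N * exp (real N ^ 2 / (4 * (c/2))) * exp (- (c/2) * ((y - p) \<bullet> (y - p)))"
      using C0 pg by (intro mult_right_mono mult_left_mono) auto
    also have "\<dots> = norm (M * exp (- (c/2) * ((y - p) \<bullet> (y - p))))"
      using C0 by (simp add: M_def abs_mult)
    finally show "norm (h y) \<le> norm (M * exp (- (c/2) * ((y - p) \<bullet> (y - p))))" .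
  qed
qed

lemma lborel_integral_affine_euclid:
  fixes f :: "'a::euclidean_space \<Rightarrow> 'b::{banach,second_countable_topology}"
  assumes f: "integrable lborel f" and c: "c \<noteq> 0"
  shows "(\<integral>x. f x \<partial>lborel) = (\<bar>c\<bar> ^ DIM('a)) *\<^sub>R (\<integral>x. f (t + c *\<^sub>R x) \<partial>lborel)"
proof -
  have fm[measurable]: "f \<in> borel_measurable borel" using f by (simp add: borel_measurable_integrable)
  have i2: "integrable (density (distr lborel borel (\<lambda>x. t + c *\<^sub>R x)) (\<lambda>_. ennreal (\<bar>c\<bar> ^ DIM('a)))) f"
    using f lborel_affine[OF c, of t] by simp
  show ?thesis
    apply (subst lborel_affine[OF c, of t])
    apply (subst integral_density)
       apply simp_all
    apply (subst integral_distr)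
      apply simp_all
    done
qed


lemma approx_id:
  fixes g :: "'a::euclidean_space \<Rightarrow> complex"
  assumes gc: "continuous_on UNIV g"
    and gb: "\<And>\<eta>. norm (g \<eta>) \<le> C * (1 + norm \<eta>) ^ N"
    and zero: "\<And>e. e > 0 \<Longrightarrow> (\<integral>\<eta>. g \<eta> * complex_of_real (exp (- ((\<eta> - p) \<bullet> (\<eta> - p)) / (2 * e\<^sup>2))) \<partial>lborel) = 0"
  shows "g p = 0"
proof -
  have C0: "C \<ge> 0"
  proof -
    have "0 \<le> C * (1 + norm p) ^ N" using gb[of p] norm_ge_zero order_trans by blast
    moreover have "0 < (1 + norm p) ^ N" by (simp add: add_pos_nonneg)
    ultimately show ?thesis by (simp add: zero_le_mult_iff)
  qed
  have gm: "g \<in> borel_measurable borel" using gc by (rule borel_measurable_continuous_onI)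
  define G where "G e \<eta> = g \<eta> * complex_of_real (exp (- ((\<eta> - p) \<bullet> (\<eta> - p)) / (2 * e\<^sup>2)))" for e \<eta>
  define gs where "gs z = complex_of_real (exp (- (z \<bullet> z) / 2))" for z :: 'a
  have Gint: "integrable lborel (G e)" if e: "e > 0" for e
  proof (rule integrable_polygauss[where c="1 / (2 * e\<^sup>2)" and C=C and N=N and p=p])
    show "G e \<in> borel_measurable borel" unfolding G_def using gm by measurable
    show "0 < 1 / (2 * e\<^sup>2)" using e by simp
    fix y
    have "norm (G e y) = norm (g y) * exp (- (1 / (2 * e\<^sup>2)) * ((y - p) \<bullet> (y - p)))"
      unfolding G_def by (simp add: norm_mult)
    also have "\<dots> \<le> C * (1 + norm y) ^ N * exp (- (1 / (2 * e\<^sup>2)) * ((y - p) \<bullet> (y - p)))"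
      by (intro mult_right_mono gb) auto
    finally show "norm (G e y) \<le> C * (1 + norm y) ^ N * exp (- (1 / (2 * e\<^sup>2)) * ((y - p) \<bullet> (y - p)))" .
  qed
  have Gsub: "G e (p + e *\<^sub>R z) = g (p + e *\<^sub>R z) * gs z" if e: "e > 0" for e z
  proof -
    have "(e *\<^sub>R z) \<bullet> (e *\<^sub>R z) / (2 * e\<^sup>2) = (z \<bullet> z) / 2"
      using e by (simp add: power2_eq_square)
    then show ?thesis unfolding G_def gs_def by simp
  qed
  have sub0: "(\<integral>z. g (p + e *\<^sub>R z) * gs z \<partial>lborel) = 0" if e: "e > 0" for e
  proof -
    have "0 = (\<integral>\<eta>. G e \<eta> \<partial>lborel)" using zero[OF e] unfolding G_def by simp
    also have "\<dots> = (\<bar>e\<bar> ^ DIM('a)) *\<^sub>R (\<integral>z. G e (p + e *\<^sub>R z) \<partial>lborel)"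
      using e by (intro lborel_integral_affine_euclid Gint) auto
    also have "(\<integral>z. G e (p + e *\<^sub>R z) \<partial>lborel) = (\<integral>z. g (p + e *\<^sub>R z) * gs z \<partial>lborel)"
      using Gsub[OF e] by simp
    finally show ?thesis using e by simp
  qed
  define s where "s k z = g (p + (1 / real (Suc k)) *\<^sub>R z) * gs z" for k z
  define f where "f z = g p * gs z" for z
  define M where "M = C * (1 + norm p) ^ N * exp (real N ^ 2 / (4 * (1/4)))"
  define w where "w z = M * exp (- (1/4) * ((z - 0) \<bullet> (z - 0)))" for z :: 'a
  have lim: "(\<lambda>k. \<integral>z. s k z \<partial>lborel) \<longlonglongrightarrow> (\<integral>z. f z \<partial>lborel)"
  proof (rule integral_dominated_convergence[where w=w])
    show "f \<in> borel_measurable lborel" unfolding f_def gs_def by measurable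
    show "s k \<in> borel_measurable lborel" for k unfolding s_def gs_def using gm by measurable
    show "integrable lborel w" unfolding w_def by (intro integrable_mult_right gauss_integrable) auto
    show "AE z in lborel. (\<lambda>k. s k z) \<longlonglongrightarrow> f z"
    proof (intro AE_I2)
      fix z
      have l0: "(\<lambda>k. 1 / real (Suc k)) \<longlonglongrightarrow> 0"
        using LIMSEQ_inverse_real_of_nat by (simp add: inverse_eq_divide)
      have "(\<lambda>k. p + (1 / real (Suc k)) *\<^sub>R z) \<longlonglongrightarrow> p + 0 *\<^sub>R z"
        by (intro tendsto_add tendsto_const tendsto_scaleR l0)
      then have l1: "(\<lambda>k. p + (1 / real (Suc k)) *\<^sub>R z) \<longlonglongrightarrow> p" by simp
      have ic: "isCont g p" using gc by (simp add: continuous_on_eq_continuous_at)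
      have "(\<lambda>k. g (p + (1 / real (Suc k)) *\<^sub>R z)) \<longlonglongrightarrow> g p"
        by (rule isCont_tendsto_compose[OF ic l1])
      then show "(\<lambda>k. s k z) \<longlonglongrightarrow> f z" unfolding s_def f_def by (intro tendsto_intros)
    qed
    show "AE z in lborel. norm (s k z) \<le> w z" for k
    proof (intro AE_I2)
      fix z
      define e where "e = 1 / real (Suc k)"
      have e0: "0 < e" "e \<le> 1" by (auto simp: e_def)
      have "norm (p + e *\<^sub>R z) \<le> norm p + norm (e *\<^sub>R z)" by (rule norm_triangle_ineq)
      also have "norm (e *\<^sub>R z) = e * norm z" using e0 by simp
      also have "e * norm z \<le> norm z" using e0 by (intro mult_left_le_one_le) auto
      finally have nn: "norm (p + e *\<^sub>R z) \<le> norm p + norm z" by simp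
      have ex: "(1 + norm p) * (1 + norm z) = 1 + norm p + norm z + norm p * norm z" by (simp add: algebra_simps)
      have "0 \<le> norm p * norm z" by simp
      with nn ex have n1: "1 + norm (p + e *\<^sub>R z) \<le> (1 + norm p) * (1 + norm z)" by linarith
      have pw: "(1 + norm (p + e *\<^sub>R z)) ^ N \<le> (1 + norm p) ^ N * (1 + norm z) ^ N"
        by (simp add: power_mult_distrib[symmetric]) (intro power_mono n1, simp)
      have sq: "z \<bullet> z = (norm z)\<^sup>2" by (simp add: power2_norm_eq_inner)
      have pg: "(1 + norm z) ^ N * exp (- (1/4) * (norm z)\<^sup>2) \<le> exp (real N ^ 2 / (4 * (1/4)))"
        by (intro polygauss_bound) auto
      have "norm (s k z) = norm (g (p + e *\<^sub>R z)) * exp (- (z \<bullet> z) / 2)"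
        unfolding s_def gs_def e_def by (simp add: norm_mult)
      also have "\<dots> \<le> C * (1 + norm (p + e *\<^sub>R z)) ^ N * exp (- (z \<bullet> z) / 2)"
        by (intro mult_right_mono gb) auto
      also have "\<dots> \<le> C * ((1 + norm p) ^ N * (1 + norm z) ^ N) * exp (- (z \<bullet> z) / 2)"
        using C0 pw by (intro mult_right_mono mult_left_mono) auto
      also have "exp (- (z \<bullet> z) / 2) = exp (- (1/4) * (norm z)\<^sup>2) * exp (- (1/4) * ((z - 0) \<bullet> (z - 0)))"
        by (simp add: sq exp_add[symmetric])
      also have "C * ((1 + norm p) ^ N * (1 + norm z) ^ N) * (exp (- (1/4) * (norm z)\<^sup>2) * exp (- (1/4) * ((z - 0) \<bullet> (z - 0))))
         = C * (1 + norm p) ^ N * ((1 + norm z) ^ N * exp (- (1/4) * (norm z)\<^sup>2)) * exp (- (1/4) * ((z - 0) \<bullet> (z - 0)))"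
        by (simp add: algebra_simps)
      also have "\<dots> \<le> C * (1 + norm p) ^ N * exp (real N ^ 2 / (4 * (1/4))) * exp (- (1/4) * ((z - 0) \<bullet> (z - 0)))"
        using C0 pg by (intro mult_right_mono mult_left_mono) auto
      also have "\<dots> = w z" by (simp add: w_def M_def)
      finally show "norm (s k z) \<le> w z" .
    qed
  qed
  have "(\<lambda>k. \<integral>z. s k z \<partial>lborel) = (\<lambda>k. 0)"
    unfolding s_def by (intro ext sub0) auto
  with lim have "(\<integral>z. f z \<partial>lborel) = 0" by (simp add: LIMSEQ_const_iff)
  moreover have "(\<integral>z. f z \<partial>lborel) = g p * complex_of_real ((sqrt (2*pi) / 1) ^ DIM('a) * exp (- ((0::'a) \<bullet> 0) / (2 * 1\<^sup>2)))"
  proof -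
    have "(\<integral>z. f z \<partial>lborel) = g p * (\<integral>z. gs z \<partial>lborel)" unfolding f_def by simp
    also have "gs = (\<lambda>y. exp (- (\<i> * complex_of_real (y \<bullet> 0)) - complex_of_real (1\<^sup>2 / 2 * (y \<bullet> y))))"
      unfolding gs_def by (auto simp: exp_of_real[symmetric])
    finally show ?thesis using gauss_fourier(2)[of 1 "0::'a"] by simp
  qed
  ultimately show "g p = 0" by simp
qed


inductive_set alg :: "(real \<Rightarrow> 'a::euclidean_space \<Rightarrow> 'k::real_normed_field) set \<Rightarrow> (real \<Rightarrow> 'a \<Rightarrow> 'k) set"
  for S where
  base: "G \<in> S \<Longrightarrow> G \<in> alg S"
| const: "(\<lambda>t y. c) \<in> alg S"
| add: "G \<in> alg S \<Longrightarrow> H \<in> alg S \<Longrightarrow> (\<lambda>t y. G t y + H t y) \<in> alg S"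
| mul: "G \<in> alg S \<Longrightarrow> H \<in> alg S \<Longrightarrow> (\<lambda>t y. G t y * H t y) \<in> alg S"

definition hasD :: "(real \<Rightarrow> 'a::euclidean_space \<Rightarrow> 'k::real_normed_field) set \<Rightarrow> (real \<Rightarrow> 'a \<Rightarrow> 'k) \<Rightarrow> bool" where
  "hasD X G \<longleftrightarrow> (\<exists>D. (\<forall>b\<in>Basis. D b \<in> X) \<and>
      (\<forall>t y. (G t has_derivative (\<lambda>v. \<Sum>b\<in>Basis. of_real (v \<bullet> b) * D b t y)) (at y)))"

definition jcont :: "(real \<Rightarrow> 'a::euclidean_space \<Rightarrow> 'k::real_normed_field) \<Rightarrow> bool" where
  "jcont G \<longleftrightarrow> continuous_on UNIV (\<lambda>z. G (fst z) (snd z))"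

definition pbound :: "(real \<Rightarrow> 'a::euclidean_space \<Rightarrow> 'k::real_normed_field) \<Rightarrow> bool" where
  "pbound G \<longleftrightarrow> (\<exists>C N. \<forall>t\<in>{0..1}. \<forall>y. norm (G t y) \<le> C * (1 + norm y) ^ N)"

lemma pbound_C_nonneg:
  fixes G :: "real \<Rightarrow> 'a::real_normed_vector \<Rightarrow> 'k::real_normed_vector"
  assumes "\<forall>t\<in>{0..1}. \<forall>y. norm (G t y) \<le> C * (1 + norm y) ^ N"
  shows "C \<ge> 0"
proof -
  have "norm (G 0 0) \<le> C * (1 + norm (0::'a)) ^ N" using assms by (metis atLeastAtMost_iff order_refl zero_le_one)
  then have "norm (G 0 0) \<le> C" by simp
  then show ?thesis using norm_ge_zero[of "G 0 0"] by linarith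
qed

lemma pow_mono_1:
  fixes r :: real
  assumes "r \<ge> 0"
  shows "(1 + r) ^ N \<le> (1 + r) ^ (N + M)"
  using assms by (intro power_increasing) simp_all

lemma alg_props:
  assumes S: "\<And>G. G \<in> S \<Longrightarrow> jcont G \<and> hasD (alg S) G \<and> pbound G"
  assumes G: "G \<in> alg S"
  shows "jcont G \<and> hasD (alg S) G \<and> pbound G"
  using G
proof induction
  case (base G)
  then show ?case using S by blast
next
  case (const c)
  have "jcont (\<lambda>t y. c)" unfolding jcont_def by (intro continuous_intros)
  moreover have "hasD (alg S) (\<lambda>t (y::'a). c)"
    unfolding hasD_def
    by (rule exI[where x="\<lambda>b t y. 0"]) (auto intro: alg.const)
  moreover have "pbound (\<lambda>t (y::'a). c)"
    unfolding pbound_def by (rule exI[where x="norm c"], rule exI[where x=0]) simp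
  ultimately show ?case by blast
next
  case (add G H)
  then have cG: "jcont G" and cH: "jcont H" and dG: "hasD (alg S) G" and dH: "hasD (alg S) H"
    and bG: "pbound G" and bH: "pbound H" by auto
  have "jcont (\<lambda>t y. G t y + H t y)" using cG cH unfolding jcont_def by (intro continuous_intros)
  moreover have "hasD (alg S) (\<lambda>t y. G t y + H t y)"
  proof -
    obtain DG where DG: "\<forall>b\<in>Basis. DG b \<in> alg S"
      "\<forall>t y. (G t has_derivative (\<lambda>v. \<Sum>b\<in>Basis. of_real (v \<bullet> b) * DG b t y)) (at y)"
      using dG unfolding hasD_def by blast
    obtain DH where DH: "\<forall>b\<in>Basis. DH b \<in> alg S"
      "\<forall>t y. (H t has_derivative (\<lambda>v. \<Sum>b\<in>Basis. of_real (v \<bullet> b) * DH b t y)) (at y)"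
      using dH unfolding hasD_def by blast
    show ?thesis unfolding hasD_def
    proof (intro exI[where x="\<lambda>b t y. DG b t y + DH b t y"] conjI allI ballI)
      show "(\<lambda>t y. DG b t y + DH b t y) \<in> alg S" if "b \<in> Basis" for b
        using that DG DH by (auto intro: alg.add)
      fix t y
      have "((\<lambda>y. G t y + H t y) has_derivative (\<lambda>v. (\<Sum>b\<in>Basis. of_real (v \<bullet> b) * DG b t y) + (\<Sum>b\<in>Basis. of_real (v \<bullet> b) * DH b t y))) (at y)"
        using DG DH by (intro has_derivative_add) auto
      then show "((\<lambda>y. G t y + H t y) has_derivative (\<lambda>v. \<Sum>b\<in>Basis. of_real (v \<bullet> b) * (DG b t y + DH b t y))) (at y)"
        by (simp add: distrib_left sum.distrib)
    qed
  qed
  moreover have "pbound (\<lambda>t y. G t y + H t y)"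
  proof -
    obtain C1 N1 where b1: "\<forall>t\<in>{0..1}. \<forall>y. norm (G t y) \<le> C1 * (1 + norm y) ^ N1" using bG unfolding pbound_def by blast
    obtain C2 N2 where b2: "\<forall>t\<in>{0..1}. \<forall>y. norm (H t y) \<le> C2 * (1 + norm y) ^ N2" using bH unfolding pbound_def by blast
    have C1: "C1 \<ge> 0" using pbound_C_nonneg[OF b1] .
    have C2: "C2 \<ge> 0" using pbound_C_nonneg[OF b2] .
    show ?thesis unfolding pbound_def
    proof (intro exI[where x="C1 + C2"] exI[where x="N1 + N2"] ballI allI)
      fix t y assume t: "t \<in> {0..1::real}"
      have "norm (G t y + H t y) \<le> norm (G t y) + norm (H t y)" by (rule norm_triangle_ineq)
      also have "\<dots> \<le> C1 * (1 + norm y) ^ N1 + C2 * (1 + norm y) ^ N2" using b1 b2 t by (intro add_mono) auto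
      also have "\<dots> \<le> C1 * (1 + norm y) ^ (N1 + N2) + C2 * (1 + norm y) ^ (N2 + N1)"
        using C1 C2 by (intro add_mono mult_left_mono pow_mono_1) auto
      finally show "norm (G t y + H t y) \<le> (C1 + C2) * (1 + norm y) ^ (N1 + N2)"
        by (simp add: algebra_simps add.commute)
    qed
  qed
  ultimately show ?case by blast
next
  case (mul G H)
  then have cG: "jcont G" and cH: "jcont H" and dG: "hasD (alg S) G" and dH: "hasD (alg S) H"
    and bG: "pbound G" and bH: "pbound H" and GS: "G \<in> alg S" and HS: "H \<in> alg S" by auto
  have "jcont (\<lambda>t y. G t y * H t y)" using cG cH unfolding jcont_def by (intro continuous_intros)
  moreover have "hasD (alg S) (\<lambda>t y. G t y * H t y)"
  proof -
    obtain DG where DG: "\<forall>b\<in>Basis. DG b \<in> alg S"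
      "\<forall>t y. (G t has_derivative (\<lambda>v. \<Sum>b\<in>Basis. of_real (v \<bullet> b) * DG b t y)) (at y)"
      using dG unfolding hasD_def by blast
    obtain DH where DH: "\<forall>b\<in>Basis. DH b \<in> alg S"
      "\<forall>t y. (H t has_derivative (\<lambda>v. \<Sum>b\<in>Basis. of_real (v \<bullet> b) * DH b t y)) (at y)"
      using dH unfolding hasD_def by blast
    show ?thesis unfolding hasD_def
    proof (intro exI[where x="\<lambda>b t y. G t y * DH b t y + DG b t y * H t y"] conjI allI ballI)
      show "(\<lambda>t y. G t y * DH b t y + DG b t y * H t y) \<in> alg S" if "b \<in> Basis" for b
        using that DG DH GS HS by (auto intro!: alg.add alg.mul)
      fix t y
      have "((\<lambda>y. G t y * H t y) has_derivative (\<lambda>v. G t y * (\<Sum>b\<in>Basis. of_real (v \<bullet> b) * DH b t y) + (\<Sum>b\<in>Basis. of_real (v \<bullet> b) * DG b t y) * H t y)) (at y)"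
        using DG DH by (intro has_derivative_mult) auto
      then show "((\<lambda>y. G t y * H t y) has_derivative (\<lambda>v. \<Sum>b\<in>Basis. of_real (v \<bullet> b) * (G t y * DH b t y + DG b t y * H t y))) (at y)"
        by (simp add: distrib_left sum.distrib sum_distrib_left sum_distrib_right algebra_simps)
    qed
  qed
  moreover have "pbound (\<lambda>t y. G t y * H t y)"
  proof -
    obtain C1 N1 where b1: "\<forall>t\<in>{0..1}. \<forall>y. norm (G t y) \<le> C1 * (1 + norm y) ^ N1" using bG unfolding pbound_def by blast
    obtain C2 N2 where b2: "\<forall>t\<in>{0..1}. \<forall>y. norm (H t y) \<le> C2 * (1 + norm y) ^ N2" using bH unfolding pbound_def by blast
    have C1: "C1 \<ge> 0" using pbound_C_nonneg[OF b1] .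
    show ?thesis unfolding pbound_def
    proof (intro exI[where x="C1 * C2"] exI[where x="N1 + N2"] ballI allI)
      fix t y assume t: "t \<in> {0..1::real}"
      have "norm (G t y * H t y) = norm (G t y) * norm (H t y)" by (rule norm_mult)
      also have "\<dots> \<le> (C1 * (1 + norm y) ^ N1) * (C2 * (1 + norm y) ^ N2)"
        using b1 b2 t C1 by (intro mult_mono) auto
      finally show "norm (G t y * H t y) \<le> (C1 * C2) * (1 + norm y) ^ (N1 + N2)"
        by (simp add: algebra_simps power_add)
    qed
  qed
  ultimately show ?case by blast
qed


lemma jcont_slice:
  fixes G :: "real \<Rightarrow> 'a::euclidean_space \<Rightarrow> 'k::real_normed_field"
  assumes "jcont G"
  shows "continuous_on A (\<lambda>t. G t y)"
proof -
  have "continuous_on UNIV (\<lambda>z. G (fst z) (snd z))" using assms unfolding jcont_def .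
  then have "continuous_on A ((\<lambda>z. G (fst z) (snd z)) \<circ> (\<lambda>t. (t, y)))"
    by (intro continuous_on_compose continuous_intros) (auto intro: continuous_on_subset)
  then show ?thesis by (simp add: o_def)
qed

lemma jcont_swap:
  fixes G :: "real \<Rightarrow> 'a::euclidean_space \<Rightarrow> 'k::real_normed_field"
  assumes "jcont G"
  shows "continuous_on A (\<lambda>x. G (snd x) (fst x))"
proof -
  have c: "continuous_on UNIV (\<lambda>z. G (fst z) (snd z))" using assms unfolding jcont_def .
  have sw: "continuous_on A (\<lambda>x::('a\<times>real). (snd x, fst x))"
    by (intro continuous_on_Pair continuous_on_snd continuous_on_fst continuous_on_id)
  have "continuous_on A ((\<lambda>z. G (fst z) (snd z)) \<circ> (\<lambda>x. (snd x, fst x)))"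
    by (rule continuous_on_compose[OF sw]) (rule continuous_on_subset[OF c], simp)
  then show ?thesis by (simp add: o_def)
qed

lemma param_integral_deriv:
  fixes G :: "real \<Rightarrow> 'a::euclidean_space \<Rightarrow> real"
  assumes cG: "jcont G"
    and D: "\<And>t y. (G t has_derivative (\<lambda>v. \<Sum>b\<in>Basis. (v \<bullet> b) * D b t y)) (at y)"
    and cD: "\<And>b. b \<in> Basis \<Longrightarrow> jcont (D b)"
  shows "((\<lambda>y. integral {0..1} (\<lambda>t. G t y)) has_derivative
            (\<lambda>v. \<Sum>b\<in>Basis. (v \<bullet> b) * integral {0..1} (\<lambda>t. D b t y0))) (at y0)"
proof -
  define fx where "fx x t = (\<Sum>b\<in>Basis. D b t x *\<^sub>R blinfun_inner_left b)" for x t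
  have fxa: "blinfun_apply (fx x t) = (\<lambda>v. \<Sum>b\<in>Basis. (v \<bullet> b) * D b t x)" for x t
    by (rule ext) (simp add: fx_def blinfun.sum_left scaleR_blinfun.rep_eq mult.commute)
  have lr: "((\<lambda>x. integral (cbox 0 1) (\<lambda>t. G t x)) has_derivative integral (cbox 0 1) (fx y0)) (at y0 within UNIV)"
  proof (rule leibniz_rule)
    show "((\<lambda>x. G t x) has_derivative blinfun_apply (fx x t)) (at x within UNIV)" for x t
      unfolding fxa using D[of t x] by simp
    show "(\<lambda>t. G t x) integrable_on cbox 0 1" for x
      by (intro integrable_continuous jcont_slice cG)
    show "continuous_on (UNIV \<times> cbox 0 1) (\<lambda>(x, t). fx x t)"
      unfolding fx_def split_beta
      by (intro continuous_intros jcont_swap cD)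
  qed auto
  have fxi: "(fx y0) integrable_on cbox 0 1"
    unfolding fx_def
    by (intro integrable_continuous continuous_intros jcont_slice cD) 
  have "blinfun_apply (integral (cbox 0 1) (fx y0)) v = (\<Sum>b\<in>Basis. (v \<bullet> b) * integral {0..1} (\<lambda>t. D b t y0))" for v
  proof -
    have "blinfun_apply (integral (cbox 0 1) (fx y0)) v = integral (cbox 0 1) (\<lambda>t. blinfun_apply (fx y0 t) v)"
      by (rule blinfun_apply_integral[OF fxi])
    also have "\<dots> = integral (cbox 0 1) (\<lambda>t. \<Sum>b\<in>Basis. (v \<bullet> b) * D b t y0)" by (simp add: fxa)
    also have "\<dots> = (\<Sum>b\<in>Basis. integral (cbox 0 1) (\<lambda>t. (v \<bullet> b) * D b t y0))"
      by (intro integral_sum integrable_continuous continuous_intros jcont_slice cD) auto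
    also have "\<dots> = (\<Sum>b\<in>Basis. (v \<bullet> b) * integral {0..1} (\<lambda>t. D b t y0))"
      by (intro sum.cong refl) simp
    finally show ?thesis .
  qed
  then have "blinfun_apply (integral (cbox 0 1) (fx y0)) = (\<lambda>v. \<Sum>b\<in>Basis. (v \<bullet> b) * integral {0..1} (\<lambda>t. D b t y0))"
    by (rule ext)
  with lr show ?thesis by simp
qed


lemma lin_expand:
  fixes Q :: "'a::euclidean_space \<Rightarrow> 'b::real_vector"
  assumes "linear Q"
  shows "Q v = (\<Sum>b\<in>Basis. (v \<bullet> b) *\<^sub>R Q b)"
proof -
  have "Q v = Q (\<Sum>b\<in>Basis. (v \<bullet> b) *\<^sub>R b)" by (simp add: euclidean_representation)
  also have "\<dots> = (\<Sum>b\<in>Basis. (v \<bullet> b) *\<^sub>R Q b)"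
    using assms by (simp add: linear_sum linear_scale)
  finally show ?thesis .
qed

lemma alg_sum:
  assumes "finite I" "\<And>i. i \<in> I \<Longrightarrow> (\<lambda>t y. f i t y) \<in> alg S"
  shows "(\<lambda>t y. \<Sum>i\<in>I. f i t y) \<in> alg S"
  using assms
proof (induction I rule: finite_induct)
  case empty
  then show ?case using alg.const[of 0 S] by simp
next
  case (insert x F)
  then show ?case by (simp add: alg.add)
qed

definition SG :: "('a::euclidean_space \<Rightarrow> 'a) \<Rightarrow> 'a \<Rightarrow> (real \<Rightarrow> 'a \<Rightarrow> real) set" where
  "SG A x0 = {(\<lambda>t y. dDs vs A (x0 + t *\<^sub>R (y - x0)) \<bullet> c) | vs c. set vs \<subseteq> Basis}
     \<union> {(\<lambda>t y. y \<bullet> c) | c. True} \<union> {(\<lambda>t y. t)}"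

lemma polysmoothD:
  assumes "polysmooth A" "set vs \<subseteq> Basis"
  shows "\<And>p. dDs vs A differentiable (at p)"
    and "\<exists>C N. \<forall>x. norm (dDs vs A x) \<le> C * (1 + norm x) ^ N"
  using assms unfolding polysmooth_def smooth_def
  by (auto simp: differentiable_on_eq_differentiable_at)

lemma SG_props:
  fixes A :: "'a::euclidean_space \<Rightarrow> 'a"
  assumes A: "polysmooth A" and G: "G \<in> SG A x0"
  shows "jcont G \<and> hasD (alg (SG A x0)) G \<and> pbound G"
proof -
  { fix vs :: "'a list" and c :: 'a assume vs: "set vs \<subseteq> Basis"
    define q where "q = dDs vs A"
    have qd: "\<And>p. q differentiable (at p)" unfolding q_def by (rule polysmoothD(1)[OF A vs])
    have qc: "continuous_on UNIV q"
      using qd by (simp add: differentiable_imp_continuous_on differentiable_on_def differentiable_at_withinI)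
    let ?G = "\<lambda>t y. dDs vs A (x0 + t *\<^sub>R (y - x0)) \<bullet> c"
    have "jcont ?G"
    proof -
      have c1: "continuous_on UNIV (\<lambda>z::real\<times>'a. x0 + fst z *\<^sub>R (snd z - x0))" by (intro continuous_intros)
      have "continuous_on UNIV (q \<circ> (\<lambda>z::real\<times>'a. x0 + fst z *\<^sub>R (snd z - x0)))"
        by (rule continuous_on_compose[OF c1]) (rule continuous_on_subset[OF qc], simp)
      then have "continuous_on UNIV (\<lambda>z::real\<times>'a. q (x0 + fst z *\<^sub>R (snd z - x0)) \<bullet> c)"
        by (intro continuous_on_inner continuous_on_const) (simp add: o_def)
      then show ?thesis unfolding jcont_def q_def .
    qed
    moreover have "hasD (alg (SG A x0)) ?G"
      unfolding hasD_def
    proof (intro exI[where x="\<lambda>b t y. t * (dDs (b # vs) A (x0 + t *\<^sub>R (y - x0)) \<bullet> c)"] conjI ballI allI)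
      fix b :: 'a assume b: "b \<in> Basis"
      have g1: "(\<lambda>t y. t) \<in> alg (SG A x0)" by (rule alg.base) (simp add: SG_def)
      have g2: "(\<lambda>t y. dDs (b # vs) A (x0 + t *\<^sub>R (y - x0)) \<bullet> c) \<in> alg (SG A x0)"
      proof (rule alg.base)
        have bvs: "set (b # vs) \<subseteq> Basis" using b vs by simp
        then show "(\<lambda>t y. dDs (b # vs) A (x0 + t *\<^sub>R (y - x0)) \<bullet> c) \<in> SG A x0"
          unfolding SG_def by (intro UnI1 CollectI exI[of _ "b # vs"] exI[of _ c] conjI refl)
      qed
      show "(\<lambda>t y. t * (dDs (b # vs) A (x0 + t *\<^sub>R (y - x0)) \<bullet> c)) \<in> alg (SG A x0)"
        using alg.mul[OF g1 g2] by simp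
    next
      fix t :: real and y :: 'a
      define p where "p = x0 + t *\<^sub>R (y - x0)"
      define Q where "Q = frechet_derivative q (at p)"
      have qQ: "(q has_derivative Q) (at p)" unfolding Q_def using qd by (simp add: frechet_derivative_works)
      have lQ: "linear Q" using qQ by (simp add: has_derivative_linear)
      have aff: "((\<lambda>y. x0 + t *\<^sub>R (y - x0)) has_derivative (\<lambda>v. t *\<^sub>R v)) (at y)"
        by (auto intro!: derivative_eq_intros)
      have "((\<lambda>y. q (x0 + t *\<^sub>R (y - x0))) has_derivative (\<lambda>v. Q (t *\<^sub>R v))) (at y)"
      proof -
        have qQ': "(q has_derivative Q) (at (x0 + t *\<^sub>R (y - x0)))" using qQ unfolding p_def .
        show ?thesis by (rule has_derivative_compose[OF aff qQ'])
      qed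
      then have d1: "((\<lambda>y. q (x0 + t *\<^sub>R (y - x0)) \<bullet> c) has_derivative (\<lambda>v. Q (t *\<^sub>R v) \<bullet> c)) (at y)"
        by (rule has_derivative_inner_left)
      have eqv: "Q (t *\<^sub>R v) \<bullet> c = (\<Sum>b\<in>Basis. of_real (v \<bullet> b) * (t * (dDs (b # vs) A p \<bullet> c)))" for v
      proof -
        have e1: "Q (t *\<^sub>R v) = t *\<^sub>R (\<Sum>b\<in>Basis. (v \<bullet> b) *\<^sub>R Q b)"
          using lQ lin_expand[OF lQ, of v] by (simp add: linear_scale)
        have e2: "\<And>b. Q b = dDs (b # vs) A p" by (simp add: Q_def q_def dD_def)
        show ?thesis unfolding e1 by (simp add: e2 inner_sum_left sum_distrib_left algebra_simps)
      qed
      show "(?G t has_derivative (\<lambda>v. \<Sum>b\<in>Basis. of_real (v \<bullet> b) * (t * (dDs (b # vs) A (x0 + t *\<^sub>R (y - x0)) \<bullet> c)))) (at y)"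
        using d1 unfolding q_def eqv[unfolded p_def] .
    qed
    moreover have "pbound ?G"
    proof -
      obtain C N where CN: "\<forall>x. norm (dDs vs A x) \<le> C * (1 + norm x) ^ N" using polysmoothD(2)[OF A vs] by blast
      have C0: "C \<ge> 0" using CN[rule_format, of 0] norm_ge_zero[of "dDs vs A 0"] by (simp del: norm_ge_zero)
      show ?thesis unfolding pbound_def
      proof (intro exI[where x="norm c * C * (1 + 2 * norm x0) ^ N"] exI[where x=N] ballI allI)
        fix t y assume t: "t \<in> {0..1::real}"
        define p where "p = x0 + t *\<^sub>R (y - x0)"
        have "norm p \<le> norm x0 + norm (t *\<^sub>R (y - x0))" unfolding p_def by (rule norm_triangle_ineq)
        also have "norm (t *\<^sub>R (y - x0)) = t * norm (y - x0)" using t by simp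
        also have "t * norm (y - x0) \<le> norm (y - x0)" using t by (intro mult_left_le_one_le) auto
        also have "norm (y - x0) \<le> norm y + norm x0" by (rule norm_triangle_ineq4)
        finally have np: "norm p \<le> 2 * norm x0 + norm y" by simp
        have ex: "(1 + 2 * norm x0) * (1 + norm y) = 1 + 2 * norm x0 + norm y + 2 * norm x0 * norm y"
          by (simp add: algebra_simps)
        have "0 \<le> 2 * norm x0 * norm y" by simp
        with np ex have n1: "1 + norm p \<le> (1 + 2 * norm x0) * (1 + norm y)" by linarith
        have pw: "(1 + norm p) ^ N \<le> (1 + 2 * norm x0) ^ N * (1 + norm y) ^ N"
          by (simp add: power_mult_distrib[symmetric]) (intro power_mono n1, simp)
        have "norm (dDs vs A p \<bullet> c) \<le> norm (dDs vs A p) * norm c" by (simp add: Cauchy_Schwarz_ineq2)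
        also have "\<dots> \<le> C * (1 + norm p) ^ N * norm c" using CN by (intro mult_right_mono) auto
        also have "\<dots> \<le> C * ((1 + 2 * norm x0) ^ N * (1 + norm y) ^ N) * norm c"
          using C0 pw by (intro mult_right_mono mult_left_mono) auto
        finally show "norm (dDs vs A (x0 + t *\<^sub>R (y - x0)) \<bullet> c) \<le> norm c * C * (1 + 2 * norm x0) ^ N * (1 + norm y) ^ N"
          unfolding p_def by (simp add: algebra_simps)
      qed
    qed
    ultimately have "jcont ?G \<and> hasD (alg (SG A x0)) ?G \<and> pbound ?G" by blast
  } note gA = this
  { fix c :: 'a
    let ?G = "\<lambda>(t::real) y. y \<bullet> c"
    have "jcont ?G" unfolding jcont_def by (intro continuous_intros)
    moreover have "hasD (alg (SG A x0)) ?G"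
      unfolding hasD_def
    proof (intro exI[where x="\<lambda>b t y. b \<bullet> c"] conjI ballI allI)
      show "(\<lambda>t y. b \<bullet> c) \<in> alg (SG A x0)" for b by (rule alg.const)
      fix t :: real and y :: 'a
      have "((\<lambda>y. y \<bullet> c) has_derivative (\<lambda>v. v \<bullet> c)) (at y)"
        by (intro has_derivative_inner_left has_derivative_ident)
      moreover have "(\<lambda>v. v \<bullet> c) = (\<lambda>v. \<Sum>b\<in>Basis. of_real (v \<bullet> b) * (b \<bullet> c))"
      proof (rule ext)
        fix v :: 'a
        have "v \<bullet> c = (\<Sum>b\<in>Basis. (v \<bullet> b) * (c \<bullet> b))" by (rule euclidean_inner)
        then show "v \<bullet> c = (\<Sum>b\<in>Basis. of_real (v \<bullet> b) * (b \<bullet> c))" by (simp add: inner_commute)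
      qed
      ultimately show "(?G t has_derivative (\<lambda>v. \<Sum>b\<in>Basis. of_real (v \<bullet> b) * (b \<bullet> c))) (at y)" by simp
    qed
    moreover have "pbound ?G"
      unfolding pbound_def
    proof (intro exI[where x="norm c"] exI[where x=1] ballI allI)
      fix t y
      have "norm (y \<bullet> c) \<le> norm y * norm c" by (simp add: Cauchy_Schwarz_ineq2)
      then show "norm (y \<bullet> c) \<le> norm c * (1 + norm y) ^ 1" using norm_ge_zero[of c] by (simp add: algebra_simps del: norm_ge_zero)
    qed
    ultimately have "jcont ?G \<and> hasD (alg (SG A x0)) ?G \<and> pbound ?G" by blast
  } note gL = this
  have gT: "jcont (\<lambda>t (y::'a). t) \<and> hasD (alg (SG A x0)) (\<lambda>t y. t) \<and> pbound (\<lambda>t (y::'a). t)"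
  proof (intro conjI)
    show "jcont (\<lambda>t (y::'a). t)" unfolding jcont_def by (intro continuous_intros)
    show "hasD (alg (SG A x0)) (\<lambda>t y. t)"
      unfolding hasD_def
      by (intro exI[where x="\<lambda>b t y. 0"] conjI ballI allI alg.const) simp
    show "pbound (\<lambda>t (y::'a). t)"
      unfolding pbound_def by (intro exI[where x=1] exI[where x=0]) auto
  qed
  from G consider (a) vs c where "set vs \<subseteq> Basis" "G = (\<lambda>t y. dDs vs A (x0 + t *\<^sub>R (y - x0)) \<bullet> c)"
    | (b) c where "G = (\<lambda>t y. y \<bullet> c)" | (c) "G = (\<lambda>t y. t)"
    unfolding SG_def by blast
  then show ?thesis
  proof cases
    case (a vs c) then show ?thesis using gA[of vs c] by simp
  next
    case (b c) then show ?thesis using gL[of c] by simp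
  next
    case c then show ?thesis using gT by simp
  qed
qed


definition Tcl :: "('a::euclidean_space \<Rightarrow> 'a) \<Rightarrow> 'a \<Rightarrow> ('a \<Rightarrow> real) set" where
  "Tcl A x0 = {(\<lambda>y. integral {0..1} (\<lambda>t. G t y)) | G. G \<in> alg (SG A x0)}"

lemma Tcl_props:
  fixes A :: "'a::euclidean_space \<Rightarrow> 'a"
  assumes A: "polysmooth A" and F: "F \<in> Tcl A x0"
  shows "\<exists>D. (\<forall>b\<in>Basis. D b \<in> Tcl A x0) \<and> (\<forall>y. (F has_derivative (\<lambda>v. \<Sum>b\<in>Basis. (v \<bullet> b) * D b y)) (at y))
           \<and> (\<exists>C N. \<forall>y. norm (F y) \<le> C * (1 + norm y) ^ N)"
proof -
  obtain G where G: "G \<in> alg (SG A x0)" and FG: "F = (\<lambda>y. integral {0..1} (\<lambda>t. G t y))"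
    using F unfolding Tcl_def by blast
  have props: "jcont H \<and> hasD (alg (SG A x0)) H \<and> pbound H" if "H \<in> alg (SG A x0)" for H
    using alg_props[OF SG_props[OF A] that] by blast
  obtain DG where DG: "\<forall>b\<in>Basis. DG b \<in> alg (SG A x0)"
    "\<forall>t y. (G t has_derivative (\<lambda>v. \<Sum>b\<in>Basis. of_real (v \<bullet> b) * DG b t y)) (at y)"
    using props[OF G] unfolding hasD_def by blast
  show ?thesis
  proof (intro exI[where x="\<lambda>b y. integral {0..1} (\<lambda>t. DG b t y)"] conjI ballI allI)
    show "(\<lambda>y. integral {0..1} (\<lambda>t. DG b t y)) \<in> Tcl A x0" if "b \<in> Basis" for b
      using DG(1) that unfolding Tcl_def by blast
    fix y
    show "(F has_derivative (\<lambda>v. \<Sum>b\<in>Basis. (v \<bullet> b) * integral {0..1} (\<lambda>t. DG b t y))) (at y)"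
      unfolding FG
    proof (rule param_integral_deriv)
      show "jcont G" using props[OF G] by blast
      show "(G t has_derivative (\<lambda>v. \<Sum>b\<in>Basis. (v \<bullet> b) * DG b t y')) (at y')" for t y'
        using DG(2) by simp
      show "jcont (DG b)" if "b \<in> Basis" for b using props DG(1) that by blast
    qed
  next
    obtain C N where CN: "\<forall>t\<in>{0..1}. \<forall>y. norm (G t y) \<le> C * (1 + norm y) ^ N"
      using props[OF G] unfolding pbound_def by blast
    have C0: "C \<ge> 0" by (rule pbound_C_nonneg[OF CN])
    show "\<exists>C N. \<forall>y. norm (F y) \<le> C * (1 + norm y) ^ N"
    proof (intro exI[where x=C] exI[where x=N] allI)
      fix y
      have cG: "continuous_on (cbox 0 1) (\<lambda>t. G t y)"
        using props[OF G] by (intro jcont_slice) blast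
      have hi: "((\<lambda>t. G t y) has_integral integral (cbox 0 1) (\<lambda>t. G t y)) (cbox 0 1)"
        using integrable_continuous[OF cG] by (rule integrable_integral)
      have "norm (integral (cbox 0 1) (\<lambda>t. G t y)) \<le> C * (1 + norm y) ^ N * measure lborel (cbox 0 (1::real))"
        by (rule has_integral_bound[OF _ hi]) (use C0 CN in auto)
      then show "norm (F y) \<le> C * (1 + norm y) ^ N" unfolding FG by simp
    qed
  qed
qed

lemma Tcl_dD:
  fixes A :: "'a::euclidean_space \<Rightarrow> 'a"
  assumes A: "polysmooth A" and F: "F \<in> Tcl A x0" and b: "b \<in> Basis"
  shows "dD b F \<in> Tcl A x0"
proof -
  obtain D where D: "\<forall>b\<in>Basis. D b \<in> Tcl A x0" "\<forall>y. (F has_derivative (\<lambda>v. \<Sum>b\<in>Basis. (v \<bullet> b) * D b y)) (at y)"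
    using Tcl_props[OF A F] by blast
  have "dD b F = D b"
  proof
    fix y
    have "frechet_derivative F (at y) = (\<lambda>v. \<Sum>b\<in>Basis. (v \<bullet> b) * D b y)"
      using D(2) by (metis frechet_derivative_at)
    then have "dD b F y = (\<Sum>c\<in>Basis. (b \<bullet> c) * D c y)" by (simp add: dD_def)
    also have "\<dots> = (\<Sum>c\<in>Basis. (if c = b then D c y else 0))"
      using b by (intro sum.cong refl) (auto simp: inner_Basis)
    also have "\<dots> = D b y" using b by simp
    finally show "dD b F y = D b y" .
  qed
  with D(1) b show ?thesis by simp
qed

lemma Tcl_dDs:
  fixes A :: "'a::euclidean_space \<Rightarrow> 'a"
  assumes A: "polysmooth A" and F: "F \<in> Tcl A x0" and vs: "set vs \<subseteq> Basis"
  shows "dDs vs F \<in> Tcl A x0"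
  using vs by (induction vs) (auto intro: Tcl_dD[OF A] simp: F)

definition Theta :: "('a::euclidean_space \<Rightarrow> 'a) \<Rightarrow> 'a \<Rightarrow> 'a \<Rightarrow> real" where
  "Theta A x0 y = integral {0..1} (\<lambda>t. A (x0 + t *\<^sub>R (y - x0)) \<bullet> (y - x0))"

lemma Theta_Tcl:
  fixes A :: "'a::euclidean_space \<Rightarrow> 'a"
  shows "Theta A x0 \<in> Tcl A x0"
proof -
  define G where "G = (\<lambda>t y. \<Sum>b\<in>Basis. (dDs [] A (x0 + t *\<^sub>R (y - x0)) \<bullet> b) * ((y \<bullet> b) + (- (x0 \<bullet> b))))"
  have "G \<in> alg (SG A x0)"
    unfolding G_def
  proof (rule alg_sum[OF finite_Basis])
    fix b :: 'a assume "b \<in> Basis"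
    have g1: "(\<lambda>t y. dDs [] A (x0 + t *\<^sub>R (y - x0)) \<bullet> b) \<in> alg (SG A x0)"
      by (rule alg.base) (unfold SG_def, intro UnI1 CollectI exI[of _ "[]"] exI[of _ b] conjI refl, simp)
    have g2: "(\<lambda>t y. y \<bullet> b) \<in> alg (SG A x0)"
      by (rule alg.base) (unfold SG_def, intro UnI1 UnI2 CollectI exI[of _ b] conjI refl TrueI)
    have g3: "(\<lambda>t y. y \<bullet> b + (- (x0 \<bullet> b))) \<in> alg (SG A x0)"
      using alg.add[OF g2 alg.const[of "- (x0 \<bullet> b)"]] by simp
    show "(\<lambda>t y. (dDs [] A (x0 + t *\<^sub>R (y - x0)) \<bullet> b) * ((y \<bullet> b) + (- (x0 \<bullet> b)))) \<in> alg (SG A x0)"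
      using alg.mul[OF g1 g3] by simp
  qed
  moreover have "Theta A x0 = (\<lambda>y. integral {0..1} (\<lambda>t. G t y))"
  proof (rule ext)
    fix y
    have "\<And>t. A (x0 + t *\<^sub>R (y - x0)) \<bullet> (y - x0) = G t y"
    proof -
      fix t
      have "A (x0 + t *\<^sub>R (y - x0)) \<bullet> (y - x0) = (\<Sum>b\<in>Basis. (A (x0 + t *\<^sub>R (y - x0)) \<bullet> b) * ((y - x0) \<bullet> b))"
        by (rule euclidean_inner)
      then show "A (x0 + t *\<^sub>R (y - x0)) \<bullet> (y - x0) = G t y"
        unfolding G_def by (simp add: inner_diff_left)
    qed
    then show "Theta A x0 y = integral {0..1} (\<lambda>t. G t y)" by (simp add: Theta_def)
  qed
  ultimately show ?thesis unfolding Tcl_def by blast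
qed


definition SP :: "('a::euclidean_space \<Rightarrow> 'a) \<Rightarrow> 'a \<Rightarrow> (real \<Rightarrow> 'a \<Rightarrow> complex) set" where
  "SP A x0 = {(\<lambda>t y. complex_of_real (F y)) | F. F \<in> Tcl A x0} \<union> {(\<lambda>t y. complex_of_real (y \<bullet> c)) | c. True}"

lemma SP_base1:
  "F \<in> Tcl A x0 \<Longrightarrow> (\<lambda>t y. complex_of_real (F y)) \<in> alg (SP A x0)"
  by (rule alg.base) (unfold SP_def, blast)

lemma SP_base2:
  "(\<lambda>t y. complex_of_real (y \<bullet> c)) \<in> alg (SP A x0)"
  by (rule alg.base) (unfold SP_def, blast)

lemma SP_props:
  fixes A :: "'a::euclidean_space \<Rightarrow> 'a"
  assumes A: "polysmooth A" and G: "G \<in> SP A x0"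
  shows "jcont G \<and> hasD (alg (SP A x0)) G \<and> pbound G"
proof -
  { fix F assume F: "F \<in> Tcl A x0"
    obtain D where D: "\<forall>b\<in>Basis. D b \<in> Tcl A x0" "\<forall>y. (F has_derivative (\<lambda>v. \<Sum>b\<in>Basis. (v \<bullet> b) * D b y)) (at y)"
      and B: "\<exists>C N. \<forall>y. norm (F y) \<le> C * (1 + norm y) ^ N"
      using Tcl_props[OF A F] by blast
    have Fc: "continuous_on UNIV F"
      using D(2) by (meson continuous_at_imp_continuous_on has_derivative_continuous)
    let ?G = "\<lambda>(t::real) y. complex_of_real (F y)"
    have "jcont ?G" unfolding jcont_def
      by (intro continuous_intros continuous_on_compose2[OF Fc]) auto
    moreover have "hasD (alg (SP A x0)) ?G"
      unfolding hasD_def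
    proof (intro exI[where x="\<lambda>b t y. complex_of_real (D b y)"] conjI ballI allI)
      show "(\<lambda>t y. complex_of_real (D b y)) \<in> alg (SP A x0)" if "b \<in> Basis" for b
        using D(1) that by (intro SP_base1) auto
      fix t :: real and y :: 'a
      have "((\<lambda>y. complex_of_real (F y)) has_derivative (\<lambda>v. complex_of_real (\<Sum>b\<in>Basis. (v \<bullet> b) * D b y))) (at y)"
        using D(2) by (intro bounded_linear.has_derivative[OF bounded_linear_of_real]) auto
      then show "(?G t has_derivative (\<lambda>v. \<Sum>b\<in>Basis. complex_of_real (v \<bullet> b) * complex_of_real (D b y))) (at y)"
        by (simp add: of_real_sum)
    qed
    moreover have "pbound ?G"
      using B unfolding pbound_def by auto
    ultimately have "jcont ?G \<and> hasD (alg (SP A x0)) ?G \<and> pbound ?G" by blast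
  } note g1 = this
  { fix c :: 'a
    let ?G = "\<lambda>(t::real) y. complex_of_real (y \<bullet> c)"
    have "jcont ?G" unfolding jcont_def by (intro continuous_intros)
    moreover have "hasD (alg (SP A x0)) ?G"
      unfolding hasD_def
    proof (intro exI[where x="\<lambda>b t y. complex_of_real (b \<bullet> c)"] conjI ballI allI)
      show "(\<lambda>t y. complex_of_real (b \<bullet> c)) \<in> alg (SP A x0)" for b by (rule alg.const)
      fix t :: real and y :: 'a
      have "((\<lambda>y. complex_of_real (y \<bullet> c)) has_derivative (\<lambda>v. complex_of_real (v \<bullet> c))) (at y)"
        by (intro bounded_linear.has_derivative[OF bounded_linear_of_real] has_derivative_inner_left has_derivative_ident)
      moreover have "(\<lambda>v. complex_of_real (v \<bullet> c)) = (\<lambda>v. \<Sum>b\<in>Basis. complex_of_real (v \<bullet> b) * complex_of_real (b \<bullet> c))"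
      proof (rule ext)
        fix v :: 'a
        have "v \<bullet> c = (\<Sum>b\<in>Basis. (v \<bullet> b) * (c \<bullet> b))" by (rule euclidean_inner)
        then show "complex_of_real (v \<bullet> c) = (\<Sum>b\<in>Basis. complex_of_real (v \<bullet> b) * complex_of_real (b \<bullet> c))"
          by (simp add: inner_commute of_real_sum[symmetric] of_real_mult[symmetric] del: of_real_sum of_real_mult)
      qed
      ultimately show "(?G t has_derivative (\<lambda>v. \<Sum>b\<in>Basis. complex_of_real (v \<bullet> b) * complex_of_real (b \<bullet> c))) (at y)" by simp
    qed
    moreover have "pbound ?G"
      unfolding pbound_def
    proof (intro exI[where x="norm c"] exI[where x=1] ballI allI)
      fix t y
      have "\<bar>y \<bullet> c\<bar> \<le> norm y * norm c" by (simp add: Cauchy_Schwarz_ineq2)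
      moreover have "0 \<le> norm c" by simp
      ultimately show "norm (complex_of_real (y \<bullet> c)) \<le> norm c * (1 + norm y) ^ 1"
        by (simp add: algebra_simps del: norm_ge_zero)
    qed
    ultimately have "jcont ?G \<and> hasD (alg (SP A x0)) ?G \<and> pbound ?G" by blast
  } note g2 = this
  from G consider (a) F where "F \<in> Tcl A x0" "G = (\<lambda>t y. complex_of_real (F y))"
    | (b) c where "G = (\<lambda>t y. complex_of_real (y \<bullet> c))"
    unfolding SP_def by blast
  then show ?thesis
  proof cases
    case (a F) then show ?thesis using g1[of F] by simp
  next
    case (b c) then show ?thesis using g2[of c] by simp
  qed
qed

lemma SP_alg_props:
  fixes A :: "'a::euclidean_space \<Rightarrow> 'a"
  assumes A: "polysmooth A" and H: "H \<in> alg (SP A x0)"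
  shows "jcont H \<and> hasD (alg (SP A x0)) H \<and> pbound H"
  using alg_props[OF SP_props[OF A] H] by blast


lemma sum_basis_delta:
  fixes X :: "'a::euclidean_space \<Rightarrow> 'k::real_normed_field"
  assumes b: "b \<in> Basis"
  shows "(\<Sum>c\<in>Basis. of_real (b \<bullet> c) * X c) = X b"
proof -
  have "(\<Sum>c\<in>Basis. of_real (b \<bullet> c) * X c) = (\<Sum>c\<in>Basis. (if c = b then X c else 0))"
    using b by (intro sum.cong refl) (auto simp: inner_Basis)
  also have "\<dots> = X b" using b by simp
  finally show ?thesis .
qed

lemma schwartz_u:
  fixes A :: "'a::euclidean_space \<Rightarrow> 'a"
  assumes A: "polysmooth A" and e: "e > 0"
  shows "(\<lambda>y. exp (\<i> * complex_of_real (Theta A x0 y + y \<bullet> \<eta>0) - complex_of_real (e\<^sup>2 / 2 * (y \<bullet> y)))) \<in> schwartz"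
proof -
  obtain DT where DT: "\<forall>b\<in>Basis. DT b \<in> Tcl A x0"
     "\<forall>y. (Theta A x0 has_derivative (\<lambda>v. \<Sum>b\<in>Basis. (v \<bullet> b) * DT b y)) (at y)"
    using Tcl_props[OF A Theta_Tcl] by blast
  define Z where "Z y = \<i> * complex_of_real (Theta A x0 y + y \<bullet> \<eta>0) - complex_of_real (e\<^sup>2 / 2 * (y \<bullet> y))" for y
  define E where "E y = exp (Z y)" for y
  define Q where "Q b y = \<i> * complex_of_real (DT b y) + \<i> * complex_of_real (b \<bullet> \<eta>0) - complex_of_real (e\<^sup>2) * complex_of_real (y \<bullet> b)" for b y
  have Qalg: "(\<lambda>t y. Q b y) \<in> alg (SP A x0)" if b: "b \<in> Basis" for b
  proof -
    have a1: "(\<lambda>t y. complex_of_real (DT b y)) \<in> alg (SP A x0)" using DT(1) b by (intro SP_base1) auto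
    have a2: "(\<lambda>t y. complex_of_real (y \<bullet> b)) \<in> alg (SP A x0)" by (rule SP_base2)
    have "(\<lambda>t y. (\<i> * complex_of_real (DT b y) + \<i> * complex_of_real (b \<bullet> \<eta>0)) + (- complex_of_real (e\<^sup>2)) * complex_of_real (y \<bullet> b)) \<in> alg (SP A x0)"
      by (intro alg.add alg.mul alg.const a1 a2)
    then show ?thesis unfolding Q_def by simp
  qed
  have Zd: "(Z has_derivative (\<lambda>v. \<Sum>b\<in>Basis. complex_of_real (v \<bullet> b) * Q b y)) (at y)" for y
  proof -
    have d1: "((\<lambda>y. Theta A x0 y + y \<bullet> \<eta>0) has_derivative (\<lambda>v. (\<Sum>b\<in>Basis. (v \<bullet> b) * DT b y) + v \<bullet> \<eta>0)) (at y)"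
      using DT(2) by (intro has_derivative_add has_derivative_inner_left has_derivative_ident) auto
    have d2: "((\<lambda>y. y \<bullet> y) has_derivative (\<lambda>v. y \<bullet> v + v \<bullet> y)) (at y)"
      by (intro has_derivative_inner has_derivative_ident)
    have "(Z has_derivative (\<lambda>v. \<i> * complex_of_real ((\<Sum>b\<in>Basis. (v \<bullet> b) * DT b y) + v \<bullet> \<eta>0)
            - complex_of_real (e\<^sup>2 / 2 * (y \<bullet> v + v \<bullet> y)))) (at y)"
      unfolding Z_def
      by (intro has_derivative_diff has_derivative_mult_right
            bounded_linear.has_derivative[OF bounded_linear_of_real] has_derivative_mult_right d1 d2)
    moreover have "(\<lambda>v. \<i> * complex_of_real ((\<Sum>b\<in>Basis. (v \<bullet> b) * DT b y) + v \<bullet> \<eta>0)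
            - complex_of_real (e\<^sup>2 / 2 * (y \<bullet> v + v \<bullet> y))) = (\<lambda>v. \<Sum>b\<in>Basis. complex_of_real (v \<bullet> b) * Q b y)"
    proof (rule ext)
      fix v :: 'a
      have i1: "v \<bullet> \<eta>0 = (\<Sum>b\<in>Basis. (v \<bullet> b) * (\<eta>0 \<bullet> b))" by (rule euclidean_inner)
      have i2: "v \<bullet> y = (\<Sum>b\<in>Basis. (v \<bullet> b) * (y \<bullet> b))" by (rule euclidean_inner)
      have "\<i> * complex_of_real ((\<Sum>b\<in>Basis. (v \<bullet> b) * DT b y) + v \<bullet> \<eta>0)
            - complex_of_real (e\<^sup>2 / 2 * (y \<bullet> v + v \<bullet> y))
          = \<i> * complex_of_real ((\<Sum>b\<in>Basis. (v \<bullet> b) * DT b y) + (\<Sum>b\<in>Basis. (v \<bullet> b) * (\<eta>0 \<bullet> b)))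
            - complex_of_real (e\<^sup>2 * (\<Sum>b\<in>Basis. (v \<bullet> b) * (y \<bullet> b)))"
        by (simp only: i1 inner_commute[of y v] i2) (simp add: algebra_simps)
      also have "\<dots> = (\<Sum>b\<in>Basis. complex_of_real (v \<bullet> b) * Q b y)"
        unfolding Q_def
        by (simp add: of_real_sum sum_distrib_left sum.distrib sum_subtractf algebra_simps inner_commute)
      finally show "\<i> * complex_of_real ((\<Sum>b\<in>Basis. (v \<bullet> b) * DT b y) + v \<bullet> \<eta>0)
            - complex_of_real (e\<^sup>2 / 2 * (y \<bullet> v + v \<bullet> y)) = (\<Sum>b\<in>Basis. complex_of_real (v \<bullet> b) * Q b y)" .
    qed
    ultimately show ?thesis by simp
  qed
  have Ed: "(E has_derivative (\<lambda>v. E y * (\<Sum>b\<in>Basis. complex_of_real (v \<bullet> b) * Q b y))) (at y)" for y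
  proof -
    have ex: "(exp has_derivative (\<lambda>h. exp (Z y) * h)) (at (Z y))"
      using DERIV_exp[of "Z y"] unfolding has_field_derivative_def by simp
    show ?thesis unfolding E_def by (rule has_derivative_compose[OF Zd ex])
  qed
  have normE: "norm (E y) = exp (- (e\<^sup>2 / 2) * (y \<bullet> y))" for y
    unfolding E_def Z_def by (simp add: norm_exp_eq_Re)
  define Fam where "Fam = {(\<lambda>y. H 0 y * E y) | H. H \<in> alg (SP A x0)}"
  have famD: "(\<forall>y. f differentiable (at y)) \<and> (\<forall>b\<in>Basis. dD b f \<in> Fam)
      \<and> (\<exists>C N. \<forall>y. norm (f y) \<le> C * (1 + norm y) ^ N * exp (- (e\<^sup>2 / 2) * (y \<bullet> y)))" if f: "f \<in> Fam" for f
  proof -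
    obtain H where H: "H \<in> alg (SP A x0)" and fH: "f = (\<lambda>y. H 0 y * E y)" using f unfolding Fam_def by blast
    have Hp: "jcont H \<and> hasD (alg (SP A x0)) H \<and> pbound H" by (rule SP_alg_props[OF A H])
    obtain DH where DH: "\<forall>b\<in>Basis. DH b \<in> alg (SP A x0)"
      "\<forall>t y. (H t has_derivative (\<lambda>v. \<Sum>b\<in>Basis. complex_of_real (v \<bullet> b) * DH b t y)) (at y)"
      using Hp unfolding hasD_def by blast
    have fd: "(f has_derivative (\<lambda>v. H 0 y * (E y * (\<Sum>b\<in>Basis. complex_of_real (v \<bullet> b) * Q b y))
             + (\<Sum>b\<in>Basis. complex_of_real (v \<bullet> b) * DH b 0 y) * E y)) (at y)" for y
      unfolding fH using DH(2) Ed by (intro has_derivative_mult) auto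
    have "\<forall>y. f differentiable (at y)" using fd unfolding differentiable_def by blast
    moreover have "\<forall>b\<in>Basis. dD b f \<in> Fam"
    proof
      fix b :: 'a assume b: "b \<in> Basis"
      have "dD b f = (\<lambda>y. (\<lambda>t y. DH b t y + H t y * Q b y) 0 y * E y)"
      proof
        fix y
        have "dD b f y = H 0 y * (E y * (\<Sum>c\<in>Basis. complex_of_real (b \<bullet> c) * Q c y))
             + (\<Sum>c\<in>Basis. complex_of_real (b \<bullet> c) * DH c 0 y) * E y"
          unfolding dD_def using fd[of y] by (simp add: frechet_derivative_at[symmetric])
        also have "\<dots> = H 0 y * (E y * Q b y) + DH b 0 y * E y"
          using b by (simp only: sum_basis_delta)
        finally show "dD b f y = (\<lambda>t y. DH b t y + H t y * Q b y) 0 y * E y"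
          by (simp add: algebra_simps)
      qed
      moreover have "(\<lambda>t y. DH b t y + H t y * Q b y) \<in> alg (SP A x0)"
        using DH(1) b H Qalg[OF b] by (intro alg.add alg.mul) auto
      ultimately show "dD b f \<in> Fam" unfolding Fam_def
        by (intro CollectI exI[where x="\<lambda>t y. DH b t y + H t y * Q b y"] conjI) simp_all
    qed
    moreover have "\<exists>C N. \<forall>y. norm (f y) \<le> C * (1 + norm y) ^ N * exp (- (e\<^sup>2 / 2) * (y \<bullet> y))"
    proof -
      obtain C N where CN: "\<forall>t\<in>{0..1}. \<forall>y. norm (H t y) \<le> C * (1 + norm y) ^ N"
        using Hp unfolding pbound_def by blast
      show ?thesis
      proof (intro exI[where x=C] exI[where x=N] allI)
        fix y
        have "norm (f y) = norm (H 0 y) * exp (- (e\<^sup>2 / 2) * (y \<bullet> y))" unfolding fH by (simp add: norm_mult normE)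
        also have "\<dots> \<le> C * (1 + norm y) ^ N * exp (- (e\<^sup>2 / 2) * (y \<bullet> y))"
          using CN by (intro mult_right_mono) auto
        finally show "norm (f y) \<le> C * (1 + norm y) ^ N * exp (- (e\<^sup>2 / 2) * (y \<bullet> y))" .
      qed
    qed
    ultimately show ?thesis by blast
  qed
  have uF: "E \<in> Fam"
  proof -
    have "(\<lambda>y. (\<lambda>t y. 1) 0 y * E y) \<in> Fam" unfolding Fam_def
      by (intro CollectI exI[where x="\<lambda>t y. 1"] conjI alg.const) simp
    then show ?thesis by simp
  qed
  have dDsF: "dDs vs E \<in> Fam" if "set vs \<subseteq> Basis" for vs
    using that
  proof (induction vs)
    case Nil then show ?case using uF by simp
  next
    case (Cons v vs) then show ?case using famD by simp
  qed
  have "E \<in> schwartz"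
    unfolding schwartz_def
  proof (intro CollectI conjI allI impI)
    show "smooth E" unfolding smooth_def
    proof (intro allI impI)
      fix vs :: "'a list" assume "set vs \<subseteq> Basis"
      then have "\<forall>y. dDs vs E differentiable (at y)" using famD dDsF by blast
      then show "dDs vs E differentiable_on UNIV" by (simp add: differentiable_at_imp_differentiable_on)
    qed
    fix vs :: "'a list" and K :: nat assume vs: "set vs \<subseteq> Basis"
    obtain C N where CN: "\<forall>y. norm (dDs vs E y) \<le> C * (1 + norm y) ^ N * exp (- (e\<^sup>2 / 2) * (y \<bullet> y))"
      using famD[OF dDsF[OF vs]] by blast
    have C0: "C \<ge> 0"
    proof -
      have "norm (dDs vs E 0) \<le> C" using CN[rule_format, of 0] by simp
      then show ?thesis using norm_ge_zero[of "dDs vs E 0"] by linarith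
    qed
    show "\<exists>C. \<forall>x. (1 + norm x) ^ K * norm (dDs vs E x) \<le> C"
    proof (intro exI[where x="C * exp (real (K + N) ^ 2 / (4 * (e\<^sup>2 / 2)))"] allI)
      fix x :: 'a
      have sq: "x \<bullet> x = (norm x)\<^sup>2" by (simp add: power2_norm_eq_inner)
      have pg: "(1 + norm x) ^ (K + N) * exp (- (e\<^sup>2 / 2) * (norm x)\<^sup>2) \<le> exp (real (K + N) ^ 2 / (4 * (e\<^sup>2 / 2)))"
        using e by (intro polygauss_bound) auto
      have "(1 + norm x) ^ K * norm (dDs vs E x) \<le> (1 + norm x) ^ K * (C * (1 + norm x) ^ N * exp (- (e\<^sup>2 / 2) * (x \<bullet> x)))"
        using CN by (intro mult_left_mono) auto
      also have "\<dots> = C * ((1 + norm x) ^ (K + N) * exp (- (e\<^sup>2 / 2) * (norm x)\<^sup>2))"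
        by (simp add: sq power_add algebra_simps)
      also have "\<dots> \<le> C * exp (real (K + N) ^ 2 / (4 * (e\<^sup>2 / 2)))"
        using C0 pg by (intro mult_left_mono) auto
      finally show "(1 + norm x) ^ K * norm (dDs vs E x) \<le> C * exp (real (K + N) ^ 2 / (4 * (e\<^sup>2 / 2)))" .
    qed
  qed
  then show ?thesis unfolding E_def Z_def by simp
qed


lemma jbr_ge1: "jbr \<xi> \<ge> 1"
  unfolding jbr_def by simp

lemma jbr_le: "jbr \<xi> \<le> 1 + norm \<xi>"
proof -
  have "sqrt (1 + (norm \<xi>)\<^sup>2) \<le> sqrt ((1 + norm \<xi>)\<^sup>2)"
    by (intro real_sqrt_le_mono) (simp add: power2_eq_square algebra_simps)
  also have "\<dots> = 1 + norm \<xi>" by simp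
  finally show ?thesis unfolding jbr_def .
qed

lemma symb_props:
  fixes a :: "(real^'n) \<times> (real^'n) \<Rightarrow> complex"
  assumes a: "a \<in> symb m"
  shows "continuous_on UNIV a"
    and "\<exists>C N. \<forall>x \<xi>. norm (a (x, \<xi>)) \<le> C * (1 + norm \<xi>) ^ N"
proof -
  have "smooth a" using a unfolding symb_def by blast
  then have "dDs [] a differentiable_on UNIV" unfolding smooth_def by (metis empty_set empty_subsetI)
  then show "continuous_on UNIV a" by (simp add: differentiable_imp_continuous_on)
  obtain C where C: "\<forall>x \<xi>. norm (a (x, \<xi>)) \<le> C * jbr \<xi> powr (m - real (length (filter (\<lambda>v. fst v = 0) ([]::((real^'n) \<times> (real^'n)) list))))"
  proof -
    have "\<forall>vs. set vs \<subseteq> Basis \<longrightarrow> (\<exists>C. \<forall>x \<xi>. norm (dDs vs a (x, \<xi>)) \<le> C * jbr \<xi> powr (m - real (length (filter (\<lambda>v. fst v = 0) vs))))"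
      using a unfolding symb_def by blast
    then have "\<exists>C. \<forall>x \<xi>. norm (dDs [] a (x, \<xi>)) \<le> C * jbr \<xi> powr (m - real (length (filter (\<lambda>v. fst v = 0) ([]::((real^'n) \<times> (real^'n)) list))))"
      by (metis empty_set empty_subsetI)
    then show ?thesis using that by auto
  qed
  then have C': "\<forall>x \<xi>. norm (a (x, \<xi>)) \<le> C * jbr \<xi> powr m" by simp
  have C0: "C \<ge> 0"
  proof -
    have "0 \<le> C * jbr (0::real^'n) powr m" using C'[rule_format, of 0 0] norm_ge_zero order_trans by blast
    moreover have "jbr (0::real^'n) powr m > 0" using jbr_ge1[of "0::real^'n"] by simp
    ultimately show ?thesis by (simp add: zero_le_mult_iff)
  qed
  define N where "N = nat \<lceil>\<bar>m\<bar>\<rceil>"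
  show "\<exists>C N. \<forall>x \<xi>. norm (a (x, \<xi>)) \<le> C * (1 + norm \<xi>) ^ N"
  proof (intro exI[where x=C] exI[where x=N] allI)
    fix x \<xi> :: "real^'n"
    have j1: "1 \<le> jbr \<xi>" by (rule jbr_ge1)
    have "jbr \<xi> powr m \<le> jbr \<xi> powr (real N)"
      using j1 unfolding N_def by (intro powr_mono) linarith+
    also have "\<dots> = jbr \<xi> ^ N" using j1 by (simp add: powr_realpow)
    also have "\<dots> \<le> (1 + norm \<xi>) ^ N" using j1 jbr_le[of \<xi>] by (intro power_mono) auto
    finally have "jbr \<xi> powr m \<le> (1 + norm \<xi>) ^ N" .
    then show "norm (a (x, \<xi>)) \<le> C * (1 + norm \<xi>) ^ N"
      using C'[rule_format, of x \<xi>] C0 by (meson mult_left_mono order_trans)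
  qed
qed


lemma opA_form:
  fixes A :: "real^'n \<Rightarrow> real^'n" and U :: "(real^'n) \<times> (real^'n) \<Rightarrow> real"
    and c :: "(real^'n) \<times> (real^'n) \<Rightarrow> complex"
  assumes e: "e > 0"
  shows "OpA A U c (\<lambda>y. exp (\<i> * complex_of_real (Theta A x0 y + y \<bullet> \<eta>0) - complex_of_real (e\<^sup>2 / 2 * (y \<bullet> y)))) x0
    = complex_of_real ((2 * pi) powr (- real CARD('n))) *
      (\<integral>\<eta>. (exp (\<i> * complex_of_real (U (x0, \<eta>))) * c (x0, \<eta>)) *
             complex_of_real ((sqrt (2*pi) / e) ^ DIM(real^'n) * exp (- ((\<eta> - \<eta>0) \<bullet> (\<eta> - \<eta>0)) / (2 * e\<^sup>2))) \<partial>lborel)"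
proof -
  have om: "omegaA A x0 y = exp (- \<i> * complex_of_real (Theta A x0 y))" for y
    unfolding omegaA_def Theta_def ..
  have pw: "exp (\<i> * complex_of_real (U (x0, \<eta>) - y \<bullet> \<eta>)) * omegaA A x0 y * c (x0, \<eta>) *
      exp (\<i> * complex_of_real (Theta A x0 y + y \<bullet> \<eta>0) - complex_of_real (e\<^sup>2 / 2 * (y \<bullet> y)))
    = (exp (\<i> * complex_of_real (U (x0, \<eta>))) * c (x0, \<eta>)) *
      exp (- (\<i> * complex_of_real (y \<bullet> (\<eta> - \<eta>0))) - complex_of_real (e\<^sup>2 / 2 * (y \<bullet> y)))" for \<eta> y
  proof -
    have ex: "\<i> * complex_of_real (U (x0, \<eta>) - y \<bullet> \<eta>) + - \<i> * complex_of_real (Theta A x0 y)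
       + (\<i> * complex_of_real (Theta A x0 y + y \<bullet> \<eta>0) - complex_of_real (e\<^sup>2 / 2 * (y \<bullet> y)))
       = \<i> * complex_of_real (U (x0, \<eta>)) + (- (\<i> * complex_of_real (y \<bullet> (\<eta> - \<eta>0))) - complex_of_real (e\<^sup>2 / 2 * (y \<bullet> y)))"
      by (simp add: inner_diff_right algebra_simps)
    have "exp (\<i> * complex_of_real (U (x0, \<eta>) - y \<bullet> \<eta>)) * omegaA A x0 y * c (x0, \<eta>) *
      exp (\<i> * complex_of_real (Theta A x0 y + y \<bullet> \<eta>0) - complex_of_real (e\<^sup>2 / 2 * (y \<bullet> y)))
      = c (x0, \<eta>) * exp (\<i> * complex_of_real (U (x0, \<eta>) - y \<bullet> \<eta>) + - \<i> * complex_of_real (Theta A x0 y)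
       + (\<i> * complex_of_real (Theta A x0 y + y \<bullet> \<eta>0) - complex_of_real (e\<^sup>2 / 2 * (y \<bullet> y))))"
      unfolding om by (simp only: exp_add mult_ac)
    also have "\<dots> = c (x0, \<eta>) * exp (\<i> * complex_of_real (U (x0, \<eta>)) + (- (\<i> * complex_of_real (y \<bullet> (\<eta> - \<eta>0))) - complex_of_real (e\<^sup>2 / 2 * (y \<bullet> y))))"
      by (simp only: ex)
    also have "\<dots> = (exp (\<i> * complex_of_real (U (x0, \<eta>))) * c (x0, \<eta>)) *
      exp (- (\<i> * complex_of_real (y \<bullet> (\<eta> - \<eta>0))) - complex_of_real (e\<^sup>2 / 2 * (y \<bullet> y)))"
      by (simp only: exp_add mult_ac)
    finally show ?thesis .
  qed
  have inner: "(\<integral>y. exp (\<i> * complex_of_real (U (x0, \<eta>) - y \<bullet> \<eta>)) * omegaA A x0 y * c (x0, \<eta>) *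
      exp (\<i> * complex_of_real (Theta A x0 y + y \<bullet> \<eta>0) - complex_of_real (e\<^sup>2 / 2 * (y \<bullet> y))) \<partial>lborel)
    = (exp (\<i> * complex_of_real (U (x0, \<eta>))) * c (x0, \<eta>)) *
       complex_of_real ((sqrt (2*pi) / e) ^ DIM(real^'n) * exp (- ((\<eta> - \<eta>0) \<bullet> (\<eta> - \<eta>0)) / (2 * e\<^sup>2)))" for \<eta>
    unfolding pw integral_mult_right_zero gauss_fourier(2)[OF e] ..
  show ?thesis unfolding OpA_def inner ..
qed


theorem lemma2p4:
  fixes U d :: "(real^'n) \<times> (real^'n) \<Rightarrow> real"
    and A :: "real^'n \<Rightarrow> real^'n"
    and B :: "'n \<Rightarrow> 'n \<Rightarrow> real^'n \<Rightarrow> real"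
    and \<delta> m :: real
  assumes U_def: "\<forall>x \<eta>. U (x, \<eta>) = x \<bullet> \<eta> + d (x, \<eta>)"
    and d_Splus: "d \<in> splus"
    and delta_lt: "\<delta> < 1"
    and mix_bound: "\<forall>x \<eta>. onorm (\<lambda>v. mixmat d x \<eta> *v v) \<le> \<delta>"
    and B_bc: "\<forall>j k. bcinf (B j k)"
    and B_antisym: "\<forall>j k x. B j k x = - B k j x"
    and B_closed: "\<forall>i j k x. dD (axis i 1) (B j k) x + dD (axis j 1) (B k i) x + dD (axis k 1) (B i j) x = 0"
    and A_pol: "polysmooth A"
    and dA_B: "\<forall>j k x. B j k x = dD (axis j 1) (\<lambda>y. A y $ k) x - dD (axis k 1) (\<lambda>y. A y $ j) x"
  shows "\<forall>a \<in> (symb m :: ((real^'n) \<times> (real^'n) \<Rightarrow> complex) set). \<forall>b \<in> symb m.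
           (\<forall>u \<in> schwartz. OpA A U a u = OpA A U b u) \<longrightarrow> a = b"
proof (intro ballI impI)
  fix a b :: "(real^'n) \<times> (real^'n) \<Rightarrow> complex"
  assume a: "a \<in> symb m" and b: "b \<in> symb m" and H: "\<forall>u \<in> schwartz. OpA A U a u = OpA A U b u"
  show "a = b"
  proof (rule ext)
    fix z :: "(real^'n) \<times> (real^'n)"
    obtain x0 \<eta>0 where z: "z = (x0, \<eta>0)" by (cases z)
    have dc: "continuous_on UNIV d"
    proof -
      have "smooth d" using d_Splus unfolding splus_def by blast
      then have "dDs [] d differentiable_on UNIV" unfolding smooth_def by (metis empty_set empty_subsetI)
      then show ?thesis by (simp add: differentiable_imp_continuous_on)
    qed
    have Uc: "continuous_on UNIV (\<lambda>\<eta>. U (x0, \<eta>))"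
    proof -
      have "continuous_on UNIV (\<lambda>\<eta>. x0 \<bullet> \<eta> + d (x0, \<eta>))"
        by (intro continuous_intros continuous_on_compose2[OF dc]) auto
      then show ?thesis using U_def by simp
    qed
    have slice: "continuous_on UNIV (\<lambda>\<eta>. c (x0, \<eta>))" if "continuous_on UNIV c" for c :: "(real^'n) \<times> (real^'n) \<Rightarrow> complex"
      by (intro continuous_on_compose2[OF that] continuous_intros) auto
    define gf where "gf c \<eta> = exp (\<i> * complex_of_real (U (x0, \<eta>))) * c (x0, \<eta>)" for c :: "(real^'n) \<times> (real^'n) \<Rightarrow> complex" and \<eta>
    have gfc: "continuous_on UNIV (gf c)" if "c \<in> symb m" for c
      unfolding gf_def by (intro continuous_intros slice symb_props(1)[OF that] Uc)
    have gfb: "\<exists>C N. C \<ge> 0 \<and> (\<forall>\<eta>. norm (gf c \<eta>) \<le> C * (1 + norm \<eta>) ^ N)" if cs: "c \<in> symb m" for c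
    proof -
      obtain C N where CN: "\<forall>x \<xi>. norm (c (x, \<xi>)) \<le> C * (1 + norm \<xi>) ^ N" using symb_props(2)[OF cs] by blast
      have C0: "C \<ge> 0"
      proof -
        have "norm (c (0, 0)) \<le> C" using CN[rule_format, of 0 0] by simp
        then show ?thesis using norm_ge_zero[of "c (0,0)"] by linarith
      qed
      show ?thesis
      proof (intro exI[where x=C] exI[where x=N] conjI C0 allI)
        fix \<eta>
        have "norm (gf c \<eta>) = norm (c (x0, \<eta>))" unfolding gf_def by (simp add: norm_mult norm_exp_eq_Re)
        also have "\<dots> \<le> C * (1 + norm \<eta>) ^ N" using CN by blast
        finally show "norm (gf c \<eta>) \<le> C * (1 + norm \<eta>) ^ N" .
      qed
    qed
    define g where "g \<eta> = gf a \<eta> - gf b \<eta>" for \<eta>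
    have gc: "continuous_on UNIV g" unfolding g_def using gfc[OF a] gfc[OF b] by (intro continuous_intros)
    obtain Ca Na where Ca: "Ca \<ge> 0" "\<forall>\<eta>. norm (gf a \<eta>) \<le> Ca * (1 + norm \<eta>) ^ Na" using gfb[OF a] by blast
    obtain Cb Nb where Cb: "Cb \<ge> 0" "\<forall>\<eta>. norm (gf b \<eta>) \<le> Cb * (1 + norm \<eta>) ^ Nb" using gfb[OF b] by blast
    have gb: "norm (g \<eta>) \<le> (Ca + Cb) * (1 + norm \<eta>) ^ (Na + Nb)" for \<eta>
    proof -
      have "norm (g \<eta>) \<le> norm (gf a \<eta>) + norm (gf b \<eta>)" unfolding g_def by (rule norm_triangle_ineq4)
      also have "\<dots> \<le> Ca * (1 + norm \<eta>) ^ Na + Cb * (1 + norm \<eta>) ^ Nb" using Ca Cb by (intro add_mono) auto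
      also have "\<dots> \<le> Ca * (1 + norm \<eta>) ^ (Na + Nb) + Cb * (1 + norm \<eta>) ^ (Nb + Na)"
        using Ca Cb by (intro add_mono mult_left_mono pow_mono_1) auto
      finally show ?thesis by (simp add: algebra_simps add.commute)
    qed
    have key: "(\<integral>\<eta>. g \<eta> * complex_of_real (exp (- ((\<eta> - \<eta>0) \<bullet> (\<eta> - \<eta>0)) / (2 * e\<^sup>2))) \<partial>lborel) = 0"
      if e: "e > 0" for e
    proof -
      define u where "u y = exp (\<i> * complex_of_real (Theta A x0 y + y \<bullet> \<eta>0) - complex_of_real (e\<^sup>2 / 2 * (y \<bullet> y)))" for y
      have us: "u \<in> schwartz" unfolding u_def by (rule schwartz_u[OF A_pol e])
      define Ke where "Ke = (sqrt (2*pi) / e) ^ DIM(real^'n)"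
      have Ke0: "Ke > 0" unfolding Ke_def using e by simp
      define F where "F \<eta> = complex_of_real (Ke * exp (- ((\<eta> - \<eta>0) \<bullet> (\<eta> - \<eta>0)) / (2 * e\<^sup>2)))" for \<eta>
      define K where "K = complex_of_real ((2 * pi) powr (- real CARD('n)))"
      have K0: "K \<noteq> 0" unfolding K_def by simp
      have opf: "OpA A U c u x0 = K * (\<integral>\<eta>. gf c \<eta> * F \<eta> \<partial>lborel)" for c
        unfolding u_def K_def F_def gf_def Ke_def by (rule opA_form[OF e])
      have "OpA A U a u x0 = OpA A U b u x0" using H us by simp
      then have eq: "(\<integral>\<eta>. gf a \<eta> * F \<eta> \<partial>lborel) = (\<integral>\<eta>. gf b \<eta> * F \<eta> \<partial>lborel)"
        unfolding opf using K0 by simp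
      have intg: "integrable lborel (\<lambda>\<eta>. gf c \<eta> * F \<eta>)" if c: "c \<in> symb m" for c
      proof -
        obtain C N where CN: "C \<ge> 0" "\<forall>\<eta>. norm (gf c \<eta>) \<le> C * (1 + norm \<eta>) ^ N" using gfb[OF c] by blast
        show ?thesis
        proof (rule integrable_polygauss[where c="1 / (2 * e\<^sup>2)" and C="C * Ke" and N=N and p=\<eta>0])
          have "continuous_on UNIV (\<lambda>\<eta>. gf c \<eta> * F \<eta>)" unfolding F_def
            using e by (intro continuous_intros gfc[OF c]) auto
          then show "(\<lambda>\<eta>. gf c \<eta> * F \<eta>) \<in> borel_measurable borel" by (rule borel_measurable_continuous_onI)
          show "0 < 1 / (2 * e\<^sup>2)" using e by simp
          fix y
          have "norm (gf c y * F y) = norm (gf c y) * (Ke * exp (- (1 / (2 * e\<^sup>2)) * ((y - \<eta>0) \<bullet> (y - \<eta>0))))"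
            unfolding F_def using Ke0 by (simp add: norm_mult abs_mult)
          also have "\<dots> \<le> C * (1 + norm y) ^ N * (Ke * exp (- (1 / (2 * e\<^sup>2)) * ((y - \<eta>0) \<bullet> (y - \<eta>0))))"
            using CN Ke0 by (intro mult_right_mono) auto
          finally show "norm (gf c y * F y) \<le> C * Ke * (1 + norm y) ^ N * exp (- (1 / (2 * e\<^sup>2)) * ((y - \<eta>0) \<bullet> (y - \<eta>0)))"
            by (simp add: algebra_simps)
        qed
      qed
      have "(\<integral>\<eta>. g \<eta> * F \<eta> \<partial>lborel) = (\<integral>\<eta>. gf a \<eta> * F \<eta> - gf b \<eta> * F \<eta> \<partial>lborel)"
        unfolding g_def by (simp add: algebra_simps)
      also have "\<dots> = 0" using eq intg[OF a] intg[OF b] by simp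
      finally have z1: "(\<integral>\<eta>. g \<eta> * F \<eta> \<partial>lborel) = 0" .
      have "(\<integral>\<eta>. g \<eta> * F \<eta> \<partial>lborel) = complex_of_real Ke * (\<integral>\<eta>. g \<eta> * complex_of_real (exp (- ((\<eta> - \<eta>0) \<bullet> (\<eta> - \<eta>0)) / (2 * e\<^sup>2))) \<partial>lborel)"
        unfolding F_def by (simp add: algebra_simps)
      with z1 Ke0 show ?thesis by simp
    qed
    have "g \<eta>0 = 0" by (rule approx_id[OF gc gb key])
    then have "gf a \<eta>0 = gf b \<eta>0" unfolding g_def by simp
    then have "a (x0, \<eta>0) = b (x0, \<eta>0)" unfolding gf_def by simp
    then show "a z = b z" using z by simp
  qed
qed


end
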